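(* Let $\mathbb{T}$ be a geometric theory over $\Sigma$. The topological groupoid $\mathbf{M}_{\mathbb{T}}=(I_{\mathbb{T}}\rightrightarrows M_{\mathbb{T}})$ of $\mathbb{S}$-indexed $\mathbb{T}$-models and isomorphisms is an open topological groupoid, i.e.\ the domain and codomain maps $d,c:I_{\mathbb{T}}\to M_{\mathbb{T}}$ are open maps.
   Context: Let $\Sigma$ be a single-sorted first-order signature with equality, $\kappa\geq|\Sigma|+\aleph_0$ an infinite cardinal, and $\mathbb{S}$ a fixed set of cardinality at least $\kappa$. An $\mathbb{S}$-indexed $\Sigma$-structure is one whose underlying set is a quotient $A/{\sim}$ of a subset $A\subseteq\mathbb{S}$ (elements $[a]$). $M_\Sigma$ is the set of all such structures and $I_\Sigma$ the set of all isomorphisms between them, with domain and codomain maps $d,c$. The logical topology on $M_\Sigma$ is the coarsest containing the sets $\{\mathbf{M}:[a]\in\mathbf{M}\}$ ($a\in\mathbb{S}$), $\{\mathbf{M}:[\mathbf{a}]\in R^{\mathbf{M}}\}$ (each $n$-ary relation symbol $R$ including equality and nullary symbols, $\mathbf{a}$ an $n$-tuple from $\mathbb{S}$), and $\{\mathbf{M}:f^{\mathbf{M}}([\mathbf{a}])=[b]\}$ (each function symbol $f$). The logical topology on $I_\Sigma$ is the coarsest making $d,c$ continuous and containing all $\{\mathbf{f}:[a]\in d(\mathbf{f}),[b]\in c(\mathbf{f}),\mathbf{f}([a])=[b]\}$. $M_{\mathbb{T}}\subseteq M_\Sigma$ is the set of $\mathbb{S}$-indexed $\mathbb{T}$-models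 and $I_{\mathbb{T}}\subseteq I_\Sigma$ the isomorphisms between them, with subspace topologies, forming a topological groupoid with composition, identities and inverses. *)

theory Defs
  imports "HOL-Analysis.Analysis" "HOL-Library.Equipollence"
begin

datatype 'f trm = Var nat | Fn 'f "'f trm list"

datatype ('f, 'r, 'i) gfm =
    GTop
  | GEq "'f trm" "'f trm"
  | GRel 'r "'f trm list"
  | GConj "('f, 'r, 'i) gfm" "('f, 'r, 'i) gfm"
  | GDisj "'i set" "'i \<Rightarrow> ('f, 'r, 'i) gfm"
  | GEx nat "('f, 'r, 'i) gfm"

primrec fv_trm :: "'f trm \<Rightarrow> nat set" where
  "fv_trm (Var n) = {n}"
| "fv_trm (Fn f ts) = \<Union> (set (map fv_trm ts))"

primrec wf_trm :: "('f \<Rightarrow> nat) \<Rightarrow> 'f trm \<Rightarrow> bool" where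
  "wf_trm ar_f (Var n) = True"
| "wf_trm ar_f (Fn f ts) = (length ts = ar_f f \<and> list_all id (map (wf_trm ar_f) ts))"

primrec fv_fm :: "('f, 'r, 'i) gfm \<Rightarrow> nat set" where
  "fv_fm GTop = {}"
| "fv_fm (GEq t u) = fv_trm t \<union> fv_trm u"
| "fv_fm (GRel R ts) = (\<Union>t\<in>set ts. fv_trm t)"
| "fv_fm (GConj \<phi> \<psi>) = fv_fm \<phi> \<union> fv_fm \<psi>"
| "fv_fm (GDisj I F) = \<Union> ((fv_fm \<circ> F) ` I)"
| "fv_fm (GEx x \<phi>) = fv_fm \<phi> - {x}"

primrec wf_fm :: "('f \<Rightarrow> nat) \<Rightarrow> ('r \<Rightarrow> nat) \<Rightarrow> ('f, 'r, 'i) gfm \<Rightarrow> bool" where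
  "wf_fm ar_f ar_r GTop = True"
| "wf_fm ar_f ar_r (GEq t u) = (wf_trm ar_f t \<and> wf_trm ar_f u)"
| "wf_fm ar_f ar_r (GRel R ts) = (length ts = ar_r R \<and> (\<forall>t\<in>set ts. wf_trm ar_f t))"
| "wf_fm ar_f ar_r (GConj \<phi> \<psi>) = (wf_fm ar_f ar_r \<phi> \<and> wf_fm ar_f ar_r \<psi>)"
| "wf_fm ar_f ar_r (GDisj I F) = (\<forall>i\<in>I. (wf_fm ar_f ar_r \<circ> F) i)"
| "wf_fm ar_f ar_r (GEx x \<phi>) = wf_fm ar_f ar_r \<phi>"

text \<open>A geometric sequent \<open>\<phi> \<turnstile>_xs \<psi>\<close>: a context (finite list of variables), premise, conclusion.\<close>

type_synonym ('f, 'r, 'i) gseq = "nat list \<times> ('f, 'r, 'i) gfm \<times> ('f, 'r, 'i) gfm"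

definition wf_seq :: "('f \<Rightarrow> nat) \<Rightarrow> ('r \<Rightarrow> nat) \<Rightarrow> ('f, 'r, 'i) gseq \<Rightarrow> bool" where
  "wf_seq ar_f ar_r s = (case s of (xs, \<phi>, \<psi>) \<Rightarrow>
     wf_fm ar_f ar_r \<phi> \<and> wf_fm ar_f ar_r \<psi> \<and> fv_fm \<phi> \<union> fv_fm \<psi> \<subseteq> set xs)"

definition geometric_theory :: "('f \<Rightarrow> nat) \<Rightarrow> ('r \<Rightarrow> nat) \<Rightarrow> ('f, 'r, 'i) gseq set \<Rightarrow> bool" where
  "geometric_theory ar_f ar_r T = (\<forall>s\<in>T. wf_seq ar_f ar_r s)"

text \<open>An S-indexed structure: a subset A = scarr of S, an equivalence relation seqv on A;
the underlying set is A // seqv (elements are the classes [a]); relations are sets of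
tuples (lists) of classes, functions act on tuples of classes. Interpretations are
extensional (function values {} outside the domain), so that a structure is determined
by its mathematical content.\<close>

record ('s, 'f, 'r) sstr =
  scarr :: "'s set"
  seqv  :: "('s \<times> 's) set"
  srel  :: "'r \<Rightarrow> 's set list set"
  sfun  :: "'f \<Rightarrow> 's set list \<Rightarrow> 's set"

definition elems :: "('s, 'f, 'r) sstr \<Rightarrow> 's set set" where
  "elems M = scarr M // seqv M"

definition cls :: "('s, 'f, 'r) sstr \<Rightarrow> 's \<Rightarrow> 's set" where
  "cls M a = seqv M `` {a}"

definition is_struct :: "('f \<Rightarrow> nat) \<Rightarrow> ('r \<Rightarrow> nat) \<Rightarrow> 's set \<Rightarrow> ('s, 'f, 'r) sstr \<Rightarrow> bool" where
  "is_struct ar_f ar_r S M =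
     (scarr M \<subseteq> S \<and> equiv (scarr M) (seqv M)
      \<and> (\<forall>R. srel M R \<subseteq> {xs. length xs = ar_r R \<and> set xs \<subseteq> elems M})
      \<and> (\<forall>f xs. if length xs = ar_f f \<and> set xs \<subseteq> elems M
                then sfun M f xs \<in> elems M else sfun M f xs = {}))"

primrec teval :: "('s, 'f, 'r) sstr \<Rightarrow> (nat \<Rightarrow> 's set) \<Rightarrow> 'f trm \<Rightarrow> 's set" where
  "teval M v (Var n) = v n"
| "teval M v (Fn f ts) = sfun M f (map (teval M v) ts)"

primrec sat :: "('s, 'f, 'r) sstr \<Rightarrow> (nat \<Rightarrow> 's set) \<Rightarrow> ('f, 'r, 'i) gfm \<Rightarrow> bool" where
  "sat M v GTop = True"
| "sat M v (GEq t u) = (teval M v t = teval M v u)"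
| "sat M v (GRel R ts) = (map (teval M v) ts \<in> srel M R)"
| "sat M v (GConj \<phi> \<psi>) = (sat M v \<phi> \<and> sat M v \<psi>)"
| "sat M v (GDisj I F) = (\<exists>i\<in>I. (sat M v \<circ> F) i)"
| "sat M v (GEx x \<phi>) = (\<exists>e\<in>elems M. sat M (v(x := e)) \<phi>)"

definition sat_seq :: "('s, 'f, 'r) sstr \<Rightarrow> ('f, 'r, 'i) gseq \<Rightarrow> bool" where
  "sat_seq M s = (case s of (xs, \<phi>, \<psi>) \<Rightarrow>
     (\<forall>v. (\<forall>x\<in>set xs. v x \<in> elems M) \<longrightarrow> sat M v \<phi> \<longrightarrow> sat M v \<psi>))"

definition MSig :: "('f \<Rightarrow> nat) \<Rightarrow> ('r \<Rightarrow> nat) \<Rightarrow> 's set \<Rightarrow> ('s, 'f, 'r) sstr set" where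
  "MSig ar_f ar_r S = {M. is_struct ar_f ar_r S M}"

text \<open>Isomorphisms are triples (domain, codomain, bijection of underlying sets); the map is
extensional ({} outside the domain).\<close>

type_synonym ('s, 'f, 'r) siso = "('s, 'f, 'r) sstr \<times> ('s, 'f, 'r) sstr \<times> ('s set \<Rightarrow> 's set)"

definition is_iso :: "('f \<Rightarrow> nat) \<Rightarrow> ('r \<Rightarrow> nat) \<Rightarrow> 's set
    \<Rightarrow> ('s, 'f, 'r) sstr \<Rightarrow> ('s, 'f, 'r) sstr \<Rightarrow> ('s set \<Rightarrow> 's set) \<Rightarrow> bool" where
  "is_iso ar_f ar_r S M N g =
     (is_struct ar_f ar_r S M \<and> is_struct ar_f ar_r S N
      \<and> bij_betw g (elems M) (elems N)
      \<and> (\<forall>x. x \<notin> elems M \<longrightarrow> g x = {})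
      \<and> (\<forall>R xs. set xs \<subseteq> elems M \<longrightarrow> (xs \<in> srel M R \<longleftrightarrow> map g xs \<in> srel N R))
      \<and> (\<forall>f xs. length xs = ar_f f \<and> set xs \<subseteq> elems M \<longrightarrow>
                g (sfun M f xs) = sfun N f (map g xs)))"

definition ISig :: "('f \<Rightarrow> nat) \<Rightarrow> ('r \<Rightarrow> nat) \<Rightarrow> 's set \<Rightarrow> ('s, 'f, 'r) siso set" where
  "ISig ar_f ar_r S = {(M, N, g). is_iso ar_f ar_r S M N g}"

definition idom :: "('s, 'f, 'r) siso \<Rightarrow> ('s, 'f, 'r) sstr" where
  "idom p = fst p"

definition icod :: "('s, 'f, 'r) siso \<Rightarrow> ('s, 'f, 'r) sstr" where
  "icod p = fst (snd p)"

definition imap :: "('s, 'f, 'r) siso \<Rightarrow> 's set \<Rightarrow> 's set" where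
  "imap p = snd (snd p)"

text \<open>Subbasis of the logical topology on M_Sigma (the whole space is included so that the
generated topology has M_Sigma as its underlying set).\<close>

definition MSub :: "('f \<Rightarrow> nat) \<Rightarrow> ('r \<Rightarrow> nat) \<Rightarrow> 's set \<Rightarrow> ('s, 'f, 'r) sstr set set" where
  "MSub ar_f ar_r S =
     {MSig ar_f ar_r S}
   \<union> {{M \<in> MSig ar_f ar_r S. a \<in> scarr M} | a. a \<in> S}
   \<union> {{M \<in> MSig ar_f ar_r S. a \<in> scarr M \<and> b \<in> scarr M \<and> (a, b) \<in> seqv M} | a b. a \<in> S \<and> b \<in> S}
   \<union> {{M \<in> MSig ar_f ar_r S. set as \<subseteq> scarr M \<and> map (cls M) as \<in> srel M R} | R as.
         length as = ar_r R \<and> set as \<subseteq> S}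
   \<union> {{M \<in> MSig ar_f ar_r S. set as \<subseteq> scarr M \<and> b \<in> scarr M
          \<and> sfun M f (map (cls M) as) = cls M b} | f as b.
         length as = ar_f f \<and> set as \<subseteq> S \<and> b \<in> S}"

definition MTop :: "('f \<Rightarrow> nat) \<Rightarrow> ('r \<Rightarrow> nat) \<Rightarrow> 's set \<Rightarrow> ('s, 'f, 'r) sstr topology" where
  "MTop ar_f ar_r S = topology_generated_by (MSub ar_f ar_r S)"

definition ISub :: "('f \<Rightarrow> nat) \<Rightarrow> ('r \<Rightarrow> nat) \<Rightarrow> 's set \<Rightarrow> ('s, 'f, 'r) siso set set" where
  "ISub ar_f ar_r S =
     {ISig ar_f ar_r S}
   \<union> {{p \<in> ISig ar_f ar_r S. idom p \<in> U} | U. openin (MTop ar_f ar_r S) U}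
   \<union> {{p \<in> ISig ar_f ar_r S. icod p \<in> U} | U. openin (MTop ar_f ar_r S) U}
   \<union> {{p \<in> ISig ar_f ar_r S. a \<in> scarr (idom p) \<and> b \<in> scarr (icod p)
          \<and> imap p (cls (idom p) a) = cls (icod p) b} | a b. a \<in> S \<and> b \<in> S}"

definition ITop :: "('f \<Rightarrow> nat) \<Rightarrow> ('r \<Rightarrow> nat) \<Rightarrow> 's set \<Rightarrow> ('s, 'f, 'r) siso topology" where
  "ITop ar_f ar_r S = topology_generated_by (ISub ar_f ar_r S)"

definition MT :: "('f \<Rightarrow> nat) \<Rightarrow> ('r \<Rightarrow> nat) \<Rightarrow> 's set \<Rightarrow> ('f, 'r, 'i) gseq set
    \<Rightarrow> ('s, 'f, 'r) sstr set" where
  "MT ar_f ar_r S T = {M \<in> MSig ar_f ar_r S. \<forall>s\<in>T. sat_seq M s}"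

definition IT :: "('f \<Rightarrow> nat) \<Rightarrow> ('r \<Rightarrow> nat) \<Rightarrow> 's set \<Rightarrow> ('f, 'r, 'i) gseq set
    \<Rightarrow> ('s, 'f, 'r) siso set" where
  "IT ar_f ar_r S T = {p \<in> ISig ar_f ar_r S. idom p \<in> MT ar_f ar_r S T \<and> icod p \<in> MT ar_f ar_r S T}"

end

theory Submission
  imports Defs
begin


lemma inj_avoid:
  assumes "infinite S" "finite F"
  shows "\<exists>h. inj_on h S \<and> h ` S \<subseteq> S - F"
  using assms(2)
proof (induction F rule: finite_induct)
  case empty
  have "inj_on id S \<and> id ` S \<subseteq> S - {}" by simp
  then show ?case by blast
next
  case (insert a F)
  from insert.IH obtain h where h: "inj_on h S" "h ` S \<subseteq> S - F" by (elim exE conjE)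
  have inf1: "infinite (S - F)" using Diff_infinite_finite[OF insert.hyps(1) assms(1)] .
  obtain h2 where h2: "bij_betw h2 (S - F) (S - F - {a})" using infinite_imp_bij_betw[OF inf1, of a] by (elim exE)
  have i1: "inj_on h2 (h ` S)" using inj_on_subset[OF bij_betw_imp_inj_on[OF h2] h(2)] .
  have "inj_on (h2 \<circ> h) S" using comp_inj_on[OF h(1) i1] .
  moreover have "(h2 \<circ> h) ` S \<subseteq> S - insert a F"
  proof -
    have "(h2 \<circ> h) ` S = h2 ` (h ` S)" by (simp add: image_comp)
    also have "\<dots> \<subseteq> h2 ` (S - F)" using h(2) by (rule image_mono)
    also have "\<dots> = S - F - {a}" using bij_betw_imp_surj_on[OF h2] .
    finally show ?thesis by blast
  qed
  ultimately show ?case by blast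
qed

lemma struct_equiv: "is_struct ar_f ar_r S M \<Longrightarrow> equiv (scarr M) (seqv M)"
  by (simp add: is_struct_def)

lemma cls_in_elems: "is_struct ar_f ar_r S M \<Longrightarrow> a \<in> scarr M \<Longrightarrow> cls M a \<in> elems M"
  unfolding cls_def elems_def by (simp add: quotientI)

lemma cls_eq_iff: "is_struct ar_f ar_r S M \<Longrightarrow> a \<in> scarr M \<Longrightarrow> b \<in> scarr M \<Longrightarrow>
   cls M a = cls M b \<longleftrightarrow> (a, b) \<in> seqv M"
  unfolding cls_def using struct_equiv equiv_class_eq_iff by fastforce

lemma elems_cls: "is_struct ar_f ar_r S M \<Longrightarrow> X \<in> elems M \<Longrightarrow> \<exists>a\<in>scarr M. X = cls M a"
  unfolding cls_def elems_def by (auto elim: quotientE)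

lemma empty_notin_elems: "is_struct ar_f ar_r S M \<Longrightarrow> {} \<notin> elems M"
  unfolding elems_def using struct_equiv in_quotient_imp_non_empty by blast

lemma sfun_in:
  assumes "is_struct ar_f ar_r S M" "length xs = ar_f f" "set xs \<subseteq> elems M"
  shows "sfun M f xs \<in> elems M"
proof -
  from assms(1) have "if length xs = ar_f f \<and> set xs \<subseteq> elems M then sfun M f xs \<in> elems M else sfun M f xs = {}"
    unfolding is_struct_def by blast
  then show ?thesis using assms(2,3) by simp
qed

lemma iso_rel: "is_iso ar_f ar_r S M N g \<Longrightarrow> set xs \<subseteq> elems M \<Longrightarrow> (xs \<in> srel M R) = (map g xs \<in> srel N R)"
  by (simp add: is_iso_def)
lemma iso_fun: "is_iso ar_f ar_r S M N g \<Longrightarrow> length xs = ar_f f \<Longrightarrow> set xs \<subseteq> elems M \<Longrightarrow>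
   g (sfun M f xs) = sfun N f (map g xs)"
  by (simp add: is_iso_def)
lemma iso_bij: "is_iso ar_f ar_r S M N g \<Longrightarrow> bij_betw g (elems M) (elems N)"
  by (simp add: is_iso_def)
lemma iso_ext: "is_iso ar_f ar_r S M N g \<Longrightarrow> x \<notin> elems M \<Longrightarrow> g x = {}"
  by (simp add: is_iso_def)
lemma iso_s1: "is_iso ar_f ar_r S M N g \<Longrightarrow> is_struct ar_f ar_r S M"
  by (simp add: is_iso_def)
lemma iso_s2: "is_iso ar_f ar_r S M N g \<Longrightarrow> is_struct ar_f ar_r S N"
  by (simp add: is_iso_def)

section \<open>Invariance\<close>

lemma teval_iso:
  assumes iso: "is_iso ar_f ar_r S M N g"
  shows "wf_trm ar_f t \<Longrightarrow> (\<forall>x\<in>fv_trm t. v x \<in> elems M \<and> v' x = g (v x)) \<Longrightarrow>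
    teval M v t \<in> elems M \<and> teval N v' t = g (teval M v t)"
proof (induction t)
  case (Var n) then show ?case by simp
next
  case (Fn f ts)
  have IH: "\<forall>t\<in>set ts. teval M v t \<in> elems M \<and> teval N v' t = g (teval M v t)"
    using Fn by (auto simp: list_all_iff)
  have m: "map (teval N v') ts = map g (map (teval M v) ts)" using IH by auto
  have l: "length (map (teval M v) ts) = ar_f f" using Fn by simp
  have s: "set (map (teval M v) ts) \<subseteq> elems M" using IH by auto
  have st: "is_struct ar_f ar_r S M" using iso by (simp add: is_iso_def)
  have "teval N v' (Fn f ts) = sfun N f (map g (map (teval M v) ts))" by (simp only: teval.simps m)
  also have "\<dots> = g (sfun M f (map (teval M v) ts))" using iso l s unfolding is_iso_def by auto
  finally show ?case using sfun_in[OF st l s] by simp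
qed

lemma sat_iso:
  assumes iso: "is_iso ar_f ar_r S M N g"
  shows "wf_fm ar_f ar_r \<phi> \<Longrightarrow> (\<forall>x\<in>fv_fm \<phi>. v x \<in> elems M \<and> v' x = g (v x)) \<Longrightarrow>
    sat M v \<phi> \<longleftrightarrow> sat N v' \<phi>"
proof (induction \<phi> arbitrary: v v')
  case GTop then show ?case by simp
next
  case (GEq t u)
  have bij: "bij_betw g (elems M) (elems N)" using iso by (simp add: is_iso_def)
  have t: "teval M v t \<in> elems M \<and> teval N v' t = g (teval M v t)"
    using GEq.prems teval_iso[OF iso, of t v v'] by auto
  have u: "teval M v u \<in> elems M \<and> teval N v' u = g (teval M v u)"
    using GEq.prems teval_iso[OF iso, of u v v'] by auto
  have inj: "inj_on g (elems M)" using bij by (simp add: bij_betw_def)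
  show ?case using t u inj_on_eq_iff[OF inj, of "teval M v t" "teval M v u"] by simp
next
  case (GRel R ts)
  have IH: "\<forall>t\<in>set ts. teval M v t \<in> elems M \<and> teval N v' t = g (teval M v t)"
  proof
    fix t assume t: "t \<in> set ts"
    show "teval M v t \<in> elems M \<and> teval N v' t = g (teval M v t)"
      using teval_iso[OF iso, of t v v'] GRel.prems t by auto
  qed
  have m: "map (teval N v') ts = map g (map (teval M v) ts)" using IH by auto
  have s: "set (map (teval M v) ts) \<subseteq> elems M" using IH by auto
  have "sat N v' (GRel R ts) \<longleftrightarrow> map g (map (teval M v) ts) \<in> srel N R" by (simp only: sat.simps m)
  also have "\<dots> \<longleftrightarrow> map (teval M v) ts \<in> srel M R" using iso_rel[OF iso s] by simp
  finally show ?case by simp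
next
  case (GConj \<phi> \<psi>)
  have "sat M v \<phi> = sat N v' \<phi>" using GConj.IH(1)[of v v'] GConj.prems by simp
  moreover have "sat M v \<psi> = sat N v' \<psi>" using GConj.IH(2)[of v v'] GConj.prems by simp
  ultimately show ?case by simp
next
  case (GDisj I F)
  have "\<forall>i\<in>I. sat M v (F i) = sat N v' (F i)"
  proof
    fix i assume i: "i \<in> I"
    have r: "F i \<in> range F" by simp
    have w: "wf_fm ar_f ar_r (F i)" using GDisj.prems(1) i by simp
    have f: "\<forall>x\<in>fv_fm (F i). v x \<in> elems M \<and> v' x = g (v x)" using GDisj.prems(2) i by auto
    show "sat M v (F i) = sat N v' (F i)" using GDisj.IH[OF r w f] .
  qed
  then show ?case by auto
next
  case (GEx x \<phi>)
  have bij: "bij_betw g (elems M) (elems N)" using iso_bij[OF iso] .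
  have surj: "g ` elems M = elems N" using bij_betw_imp_surj_on[OF bij] .
  have wf: "wf_fm ar_f ar_r \<phi>" using GEx.prems(1) by simp
  have pr: "\<forall>y\<in>fv_fm \<phi> - {x}. v y \<in> elems M \<and> v' y = g (v y)" using GEx.prems(2) by simp
  have fvu: "\<forall>y\<in>fv_fm \<phi>. (v(x:=e)) y \<in> elems M \<and> (v'(x:=g e)) y = g ((v(x:=e)) y)"
    if e: "e \<in> elems M" for e
  proof
    fix y assume y: "y \<in> fv_fm \<phi>"
    show "(v(x:=e)) y \<in> elems M \<and> (v'(x:=g e)) y = g ((v(x:=e)) y)"
    proof (cases "y = x")
      case True then show ?thesis using e by simp
    next
      case False then show ?thesis using pr y by simp
    qed
  qed
  have step: "sat M (v(x:=e)) \<phi> = sat N (v'(x:=g e)) \<phi>" if e: "e \<in> elems M" for e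
    using GEx.IH[OF wf fvu[OF e]] .
  show ?case
  proof
    assume "sat M v (GEx x \<phi>)"
    then obtain e where e: "e \<in> elems M" "sat M (v(x := e)) \<phi>" by auto
    have "sat N (v'(x := g e)) \<phi>" using step[OF e(1)] e(2) by simp
    moreover have "g e \<in> elems N" using surj e(1) by blast
    ultimately show "sat N v' (GEx x \<phi>)" by (auto simp only: sat.simps)
  next
    assume "sat N v' (GEx x \<phi>)"
    then obtain e' where e: "e' \<in> elems N" "sat N (v'(x := e')) \<phi>" by auto
    define e where "e = inv_into (elems M) g e'"
    have e'': "e' \<in> g ` elems M" using e(1) surj by simp
    have e1: "e \<in> elems M" unfolding e_def using inv_into_into[OF e''] .
    have e2: "g e = e'" unfolding e_def using f_inv_into_f[OF e''] .
    have "sat M (v(x := e)) \<phi>" using step[OF e1] e(2) e2 by simp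
    then show "sat M v (GEx x \<phi>)" using e1 by auto
  qed
qed

lemma MT_iso:
  assumes iso: "is_iso ar_f ar_r S M N g" and M: "M \<in> MT ar_f ar_r S T"
    and T: "geometric_theory ar_f ar_r T"
  shows "N \<in> MT ar_f ar_r S T"
proof -
  have bij: "bij_betw g (elems M) (elems N)" using iso by (simp add: is_iso_def)
  have "sat_seq N s" if s: "s \<in> T" for s
  proof -
    obtain xs \<phi> \<psi> where s_eq: "s = (xs, \<phi>, \<psi>)" by (cases s) auto
    have wf: "wf_fm ar_f ar_r \<phi>" "wf_fm ar_f ar_r \<psi>" "fv_fm \<phi> \<union> fv_fm \<psi> \<subseteq> set xs"
      using T s unfolding geometric_theory_def wf_seq_def s_eq by auto
    have sM: "sat_seq M s" using M s by (simp add: MT_def)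
    show ?thesis unfolding s_eq sat_seq_def prod.case
    proof (intro allI impI)
      fix v' assume v': "\<forall>x\<in>set xs. v' x \<in> elems N" and sp: "sat N v' \<phi>"
      define v where "v = (\<lambda>y. inv_into (elems M) g (v' y))"
      have vv: "\<forall>x\<in>set xs. v x \<in> elems M \<and> v' x = g (v x)" using v' bij unfolding v_def
        by (auto simp: bij_betw_def inv_into_into f_inv_into_f)
      have "sat M v \<phi>" using sat_iso[OF iso wf(1), of v v'] vv wf(3) sp by auto
      then have "sat M v \<psi>" using sM vv unfolding s_eq sat_seq_def by auto
      then show "sat N v' \<psi>" using sat_iso[OF iso wf(2), of v v'] vv wf(3) by auto
    qed
  qed
  moreover have "N \<in> MSig ar_f ar_r S" using iso by (simp add: is_iso_def MSig_def)
  ultimately show ?thesis by (simp add: MT_def)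
qed



lemma construct:
  assumes M: "is_struct ar_f ar_r S M" and inf: "infinite S" and F: "finite F0" "F0 \<subseteq> S"
    and c: "\<forall>b\<in>F0. c b \<in> scarr M"
  shows "\<exists>N g. is_iso ar_f ar_r S M N g \<and> (\<forall>b\<in>F0. b \<in> scarr N \<and> g (cls M (c b)) = cls N b)"
proof -
  obtain j where j: "inj_on j S" "j ` S \<subseteq> S - F0" using inj_avoid[OF inf F(1)] by blast
  have MS: "scarr M \<subseteq> S" using M by (simp add: is_struct_def)
  have eqM: "equiv (scarr M) (seqv M)" using M by (simp add: is_struct_def)
  define A where "A = F0 \<union> j ` scarr M"
  define k where "k = (\<lambda>b. if b \<in> F0 then c b else inv_into S j b)"
  have kj: "k (j x) = x" if "x \<in> scarr M" for x
    using that j MS unfolding k_def by (auto simp: inv_into_f_f subsetD)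
  have kA: "k y \<in> scarr M" if yA: "y \<in> A" for y
  proof (cases "y \<in> F0")
    case True then show ?thesis using c by (simp add: k_def)
  next
    case False then obtain x where "x \<in> scarr M" "y = j x" using yA unfolding A_def by auto
    then show ?thesis using kj by simp
  qed
  have AS: "A \<subseteq> S" using F j MS unfolding A_def by auto
  define g where "g = (\<lambda>Q. if Q \<in> elems M then {y \<in> A. cls M (k y) = Q} else {})"
  define E where "E = {(x, y). x \<in> A \<and> y \<in> A \<and> (k x, k y) \<in> seqv M}"
  define ginv where "ginv = inv_into (elems M) g"
  define N where "N = \<lparr>scarr = A, seqv = E,
      srel = (\<lambda>R. map g ` srel M R),
      sfun = (\<lambda>f ys. if length ys = ar_f f \<and> set ys \<subseteq> g ` elems M
                      then g (sfun M f (map ginv ys)) else {})\<rparr>"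
  have eqE: "equiv A E"
  proof (rule equivI)
    show "E \<subseteq> A \<times> A" by (auto simp: E_def)
    show "refl_on A E" using eqM kA unfolding E_def equiv_def refl_on_def by blast
    show "sym E" using eqM unfolding E_def equiv_def by (auto intro!: symI dest: symD)
    show "trans E" using eqM unfolding E_def equiv_def by (auto intro!: transI dest: transD)
  qed
  have clsN: "cls N y = g (cls M (k y))" if "y \<in> A" for y
  proof -
    have "cls M (k y) \<in> elems M" using cls_in_elems[OF M kA[OF that]] .
    moreover have "\<And>z. z \<in> A \<Longrightarrow> (k y, k z) \<in> seqv M \<longleftrightarrow> cls M (k z) = cls M (k y)"
      using cls_eq_iff[OF M] kA that by blast
    ultimately show ?thesis unfolding cls_def N_def g_def E_def using that by auto
  qed
  have elemsN: "elems N = g ` elems M"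
  proof
    show "elems N \<subseteq> g ` elems M"
    proof
      fix X assume "X \<in> elems N"
      then obtain y where y: "y \<in> A" "X = E `` {y}" unfolding elems_def N_def by (auto elim: quotientE)
      then have "X = cls N y" unfolding cls_def N_def by simp
      then show "X \<in> g ` elems M" using clsN y cls_in_elems[OF M kA[OF y(1)]] by auto
    qed
  next
    show "g ` elems M \<subseteq> elems N"
    proof
      fix X assume "X \<in> g ` elems M"
      then obtain x where x: "x \<in> scarr M" "X = g (cls M x)" using elems_cls[OF M] by blast
      have jx: "j x \<in> A" using x unfolding A_def by auto
      have "X = cls N (j x)" using clsN[OF jx] kj[OF x(1)] x by simp
      moreover have "cls N (j x) \<in> elems N" unfolding cls_def elems_def N_def using jx
        by (simp add: quotientI)
      ultimately show "X \<in> elems N" by simp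
    qed
  qed
  have ginj: "inj_on g (elems M)"
  proof
    fix Q Q' assume Q: "Q \<in> elems M" "Q' \<in> elems M" "g Q = g Q'"
    obtain x where x: "x \<in> scarr M" "Q = cls M x" using elems_cls[OF M Q(1)] by blast
    have jx: "j x \<in> A" using x unfolding A_def by auto
    have "j x \<in> g Q" using Q(1) x jx kj unfolding g_def by auto
    then have "j x \<in> g Q'" using Q by simp
    then show "Q = Q'" using Q(2) x kj unfolding g_def by (auto split: if_splits)
  qed
  have bij: "bij_betw g (elems M) (elems N)" using ginj elemsN by (simp add: bij_betw_def)
  have ginv_g: "ginv (g X) = X" if "X \<in> elems M" for X
    using ginj that unfolding ginv_def by (simp add: inv_into_f_f)
  have sfunN: "sfun N f xs = (if length xs = ar_f f \<and> set xs \<subseteq> elems N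
      then g (sfun M f (map ginv xs)) else {})" for f xs
    unfolding elemsN by (simp add: N_def)
  have sN: "is_struct ar_f ar_r S N"
    unfolding is_struct_def
  proof (intro conjI allI)
    show "scarr N \<subseteq> S" using AS by (simp add: N_def)
    show "equiv (scarr N) (seqv N)" using eqE by (simp add: N_def)
  next
    fix R
    have sub: "srel M R \<subseteq> {xs. length xs = ar_r R \<and> set xs \<subseteq> elems M}"
      using M unfolding is_struct_def by blast
    have srelN: "srel N R = map g ` srel M R" by (simp add: N_def)
    show "srel N R \<subseteq> {xs. length xs = ar_r R \<and> set xs \<subseteq> elems N}"
    proof
      fix ys assume "ys \<in> srel N R"
      then obtain xs where xs: "xs \<in> srel M R" "ys = map g xs" using srelN by auto
      then show "ys \<in> {xs. length xs = ar_r R \<and> set xs \<subseteq> elems N}"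
        using sub elemsN by auto
    qed
  next
    fix f xs
    show "if length xs = ar_f f \<and> set xs \<subseteq> elems N then sfun N f xs \<in> elems N else sfun N f xs = {}"
    proof (cases "length xs = ar_f f \<and> set xs \<subseteq> elems N")
      case True
      then have "set (map ginv xs) \<subseteq> elems M" using elemsN ginv_g by auto
      then have "sfun M f (map ginv xs) \<in> elems M" using sfun_in[OF M] True by simp
      then show ?thesis using True elemsN sfunN by simp
    next
      case False
      show ?thesis unfolding if_not_P[OF False] using sfunN[of f xs] unfolding if_not_P[OF False] .
    qed
  qed
  have iso: "is_iso ar_f ar_r S M N g"
    unfolding is_iso_def
  proof (intro conjI allI impI)
    show "is_struct ar_f ar_r S M" by fact
    show "is_struct ar_f ar_r S N" by fact
    show "bij_betw g (elems M) (elems N)" by fact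
  next
    fix x assume "x \<notin> elems M" then show "g x = {}" by (simp add: g_def)
  next
    fix R xs assume xs: "set xs \<subseteq> elems M"
    show "(xs \<in> srel M R) = (map g xs \<in> srel N R)"
    proof
      assume "xs \<in> srel M R" then show "map g xs \<in> srel N R" by (simp add: N_def)
    next
      assume "map g xs \<in> srel N R"
      then obtain ys where ys: "ys \<in> srel M R" "map g ys = map g xs" by (auto simp: N_def)
      have sys: "set ys \<subseteq> elems M" using ys(1) M unfolding is_struct_def by blast
      have "inj_on g (set ys \<union> set xs)"
        using inj_on_subset[OF ginj] xs sys by (meson Un_least)
      then have "ys = xs" using ys(2) map_inj_on by blast
      then show "xs \<in> srel M R" using ys by simp
    qed
  next
    fix f xs assume xs: "length xs = ar_f f \<and> set xs \<subseteq> elems M"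
    have "map ginv (map g xs) = xs" unfolding map_map by (rule map_idI) (use xs ginv_g in auto)
    moreover have "set (map g xs) \<subseteq> elems N" using xs elemsN by auto
    ultimately show "g (sfun M f xs) = sfun N f (map g xs)" using xs sfunN by simp
  qed
  have "\<forall>b\<in>F0. b \<in> scarr N \<and> g (cls M (c b)) = cls N b"
  proof
    fix b assume b: "b \<in> F0"
    then have "b \<in> A" by (simp add: A_def)
    then show "b \<in> scarr N \<and> g (cls M (c b)) = cls N b" using clsN b by (simp add: N_def k_def)
  qed
  with iso show ?thesis by blast
qed



definition "subE ar_f ar_r S a = {M \<in> MSig ar_f ar_r S. a \<in> scarr M}"
definition "subP ar_f ar_r S p = {M \<in> MSig ar_f ar_r S. fst p \<in> scarr M \<and> snd p \<in> scarr M \<and> (fst p, snd p) \<in> seqv M}"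
definition "subR ar_f ar_r S r = {M \<in> MSig ar_f ar_r S. set (snd r) \<subseteq> scarr M \<and> map (cls M) (snd r) \<in> srel M (fst r)}"
definition "subF ar_f ar_r S q = {M \<in> MSig ar_f ar_r S. set (fst (snd q)) \<subseteq> scarr M \<and> snd (snd q) \<in> scarr M
     \<and> sfun M (fst q) (map (cls M) (fst (snd q))) = cls M (snd (snd q))}"

definition validD where
  "validD ar_f ar_r S Es Ps Rs Fs \<longleftrightarrow> finite Es \<and> finite Ps \<and> finite Rs \<and> finite Fs \<and> Es \<subseteq> S
    \<and> (\<forall>p\<in>Ps. fst p \<in> S \<and> snd p \<in> S)
    \<and> (\<forall>r\<in>Rs. length (snd r) = ar_r (fst r) \<and> set (snd r) \<subseteq> S)
    \<and> (\<forall>q\<in>Fs. length (fst (snd q)) = ar_f (fst q) \<and> set (fst (snd q)) \<subseteq> S \<and> snd (snd q) \<in> S)"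

definition satD where
  "satD M Es Ps Rs Fs \<longleftrightarrow> Es \<subseteq> scarr M
    \<and> (\<forall>p\<in>Ps. fst p \<in> scarr M \<and> snd p \<in> scarr M \<and> (fst p, snd p) \<in> seqv M)
    \<and> (\<forall>r\<in>Rs. set (snd r) \<subseteq> scarr M \<and> map (cls M) (snd r) \<in> srel M (fst r))
    \<and> (\<forall>q\<in>Fs. set (fst (snd q)) \<subseteq> scarr M \<and> snd (snd q) \<in> scarr M
         \<and> sfun M (fst q) (map (cls M) (fst (snd q))) = cls M (snd (snd q)))"

definition "basicM ar_f ar_r S Es Ps Rs Fs = {M \<in> MSig ar_f ar_r S. satD M Es Ps Rs Fs}"

definition "refs Es Ps Rs Fs = Es \<union> fst ` Ps \<union> snd ` Ps \<union> (\<Union>r\<in>Rs. set (snd r))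
   \<union> (\<Union>q\<in>Fs. insert (snd (snd q)) (set (fst (snd q))))"

lemma openin_Int_INT:
  assumes "finite X" "\<forall>x\<in>X. openin T (h x)" "openin T B"
  shows "openin T (B \<inter> (\<Inter>x\<in>X. h x))"
  using assms
proof (induction X rule: finite_induct)
  case empty then show ?case by simp
next
  case (insert a X)
  have "B \<inter> (\<Inter>x\<in>insert a X. h x) = (B \<inter> (\<Inter>x\<in>X. h x)) \<inter> h a" by auto
  then show ?case using insert by (simp add: openin_Int)
qed

lemma MSig_open: "openin (MTop ar_f ar_r S) (MSig ar_f ar_r S)"
  unfolding MTop_def by (rule topology_generated_by_Basis) (simp add: MSub_def)

lemma subE_open: "a \<in> S \<Longrightarrow> openin (MTop ar_f ar_r S) (subE ar_f ar_r S a)"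
  unfolding MTop_def by (rule topology_generated_by_Basis) (auto simp: MSub_def subE_def)

lemma subP_open: "fst p \<in> S \<Longrightarrow> snd p \<in> S \<Longrightarrow> openin (MTop ar_f ar_r S) (subP ar_f ar_r S p)"
  unfolding MTop_def by (rule topology_generated_by_Basis) (unfold MSub_def subP_def, blast)

lemma subR_open: "length (snd r) = ar_r (fst r) \<Longrightarrow> set (snd r) \<subseteq> S \<Longrightarrow> openin (MTop ar_f ar_r S) (subR ar_f ar_r S r)"
  unfolding MTop_def by (rule topology_generated_by_Basis) (unfold MSub_def subR_def, blast)

lemma subF_open: "length (fst (snd q)) = ar_f (fst q) \<Longrightarrow> set (fst (snd q)) \<subseteq> S \<Longrightarrow> snd (snd q) \<in> S
   \<Longrightarrow> openin (MTop ar_f ar_r S) (subF ar_f ar_r S q)"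
  unfolding MTop_def by (rule topology_generated_by_Basis) (unfold MSub_def subF_def, blast)

lemma basicM_eq: "basicM ar_f ar_r S Es Ps Rs Fs =
   MSig ar_f ar_r S \<inter> (\<Inter>a\<in>Es. subE ar_f ar_r S a) \<inter> (\<Inter>p\<in>Ps. subP ar_f ar_r S p)
    \<inter> (\<Inter>r\<in>Rs. subR ar_f ar_r S r) \<inter> (\<Inter>q\<in>Fs. subF ar_f ar_r S q)"
  unfolding basicM_def satD_def subE_def subP_def subR_def subF_def by blast

lemma basicM_open:
  assumes "validD ar_f ar_r S Es Ps Rs Fs"
  shows "openin (MTop ar_f ar_r S) (basicM ar_f ar_r S Es Ps Rs Fs)"
proof -
  note v = assms[unfolded validD_def]
  have 1: "openin (MTop ar_f ar_r S) (MSig ar_f ar_r S \<inter> (\<Inter>a\<in>Es. subE ar_f ar_r S a))"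
    using v by (intro openin_Int_INT MSig_open) (auto intro: subE_open)
  have 2: "openin (MTop ar_f ar_r S) (MSig ar_f ar_r S \<inter> (\<Inter>a\<in>Es. subE ar_f ar_r S a) \<inter> (\<Inter>p\<in>Ps. subP ar_f ar_r S p))"
    using v by (intro openin_Int_INT 1) (auto intro: subP_open)
  have 3: "openin (MTop ar_f ar_r S) (MSig ar_f ar_r S \<inter> (\<Inter>a\<in>Es. subE ar_f ar_r S a) \<inter> (\<Inter>p\<in>Ps. subP ar_f ar_r S p)
       \<inter> (\<Inter>r\<in>Rs. subR ar_f ar_r S r))"
    using v by (intro openin_Int_INT 2) (auto intro: subR_open)
  have 4: "openin (MTop ar_f ar_r S) (MSig ar_f ar_r S \<inter> (\<Inter>a\<in>Es. subE ar_f ar_r S a) \<inter> (\<Inter>p\<in>Ps. subP ar_f ar_r S p)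
       \<inter> (\<Inter>r\<in>Rs. subR ar_f ar_r S r) \<inter> (\<Inter>q\<in>Fs. subF ar_f ar_r S q))"
    using v by (intro openin_Int_INT 3) (auto intro: subF_open)
  show ?thesis unfolding basicM_eq using 4 .
qed

lemma satD_Un: "satD M (Es \<union> Es') (Ps \<union> Ps') (Rs \<union> Rs') (Fs \<union> Fs') \<longleftrightarrow> satD M Es Ps Rs Fs \<and> satD M Es' Ps' Rs' Fs'"
  unfolding satD_def by blast

lemma validD_Un: "validD ar_f ar_r S Es Ps Rs Fs \<Longrightarrow> validD ar_f ar_r S Es' Ps' Rs' Fs' \<Longrightarrow>
    validD ar_f ar_r S (Es \<union> Es') (Ps \<union> Ps') (Rs \<union> Rs') (Fs \<union> Fs')"
  unfolding validD_def by blast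

lemma nbhd_M:
  assumes "generate_topology_on (MSub ar_f ar_r S) U"
  shows "M \<in> U \<Longrightarrow> \<exists>Es Ps Rs Fs. validD ar_f ar_r S Es Ps Rs Fs \<and> M \<in> basicM ar_f ar_r S Es Ps Rs Fs
           \<and> basicM ar_f ar_r S Es Ps Rs Fs \<subseteq> U"
  using assms
proof (induction arbitrary: M rule: generate_topology_on.induct)
  case Empty then show ?case by simp
next
  case (Int a b)
  obtain Es Ps Rs Fs where 1: "validD ar_f ar_r S Es Ps Rs Fs" "M \<in> basicM ar_f ar_r S Es Ps Rs Fs"
     "basicM ar_f ar_r S Es Ps Rs Fs \<subseteq> a" using Int by blast
  obtain Es' Ps' Rs' Fs' where 2: "validD ar_f ar_r S Es' Ps' Rs' Fs'" "M \<in> basicM ar_f ar_r S Es' Ps' Rs' Fs'"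
     "basicM ar_f ar_r S Es' Ps' Rs' Fs' \<subseteq> b" using Int by blast
  have e: "basicM ar_f ar_r S (Es \<union> Es') (Ps \<union> Ps') (Rs \<union> Rs') (Fs \<union> Fs')
     = basicM ar_f ar_r S Es Ps Rs Fs \<inter> basicM ar_f ar_r S Es' Ps' Rs' Fs'"
    unfolding basicM_def satD_Un by blast
  show ?case
    by (rule exI[of _ "Es \<union> Es'"], rule exI[of _ "Ps \<union> Ps'"], rule exI[of _ "Rs \<union> Rs'"], rule exI[of _ "Fs \<union> Fs'"])
       (use 1 2 e validD_Un in blast)
next
  case (UN K)
  then obtain k where "k \<in> K" "M \<in> k" by blast
  then show ?case using UN.IH by blast
next
  case (Basis s)
  have v0: "validD ar_f ar_r S {} {} {} {}" by (simp add: validD_def)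
  have sat0: "satD M {} {} {} {}" by (simp add: satD_def)
  consider "s = MSig ar_f ar_r S"
    | a where "a \<in> S" "s = subE ar_f ar_r S a"
    | p where "fst p \<in> S" "snd p \<in> S" "s = subP ar_f ar_r S p"
    | r where "length (snd r) = ar_r (fst r)" "set (snd r) \<subseteq> S" "s = subR ar_f ar_r S r"
    | q where "length (fst (snd q)) = ar_f (fst q)" "set (fst (snd q)) \<subseteq> S" "snd (snd q) \<in> S"
        "s = subF ar_f ar_r S q"
    using Basis.hyps unfolding MSub_def subE_def subP_def subR_def subF_def
    by (elim UnE; (elim CollectE exE conjE)?) (blast, blast, force, force, force)
  then show ?case
  proof cases
    case 1 then show ?thesis using Basis.prems v0 sat0 by (auto simp: basicM_def)
  next
    case (2 a)
    then show ?thesis using Basis.prems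
      by (intro exI[of _ "{a}"] exI[of _ "{}"]) (auto simp: basicM_def validD_def satD_def subE_def)
  next
    case (3 p)
    then show ?thesis using Basis.prems
      by (intro exI[of _ "{}"] exI[of _ "{p}"]) (auto simp: basicM_def validD_def satD_def subP_def)
  next
    case (4 r)
    then show ?thesis using Basis.prems
      by (intro exI[of _ "{}"] exI[of _ "{r}"]) (auto simp: basicM_def validD_def satD_def subR_def)
  next
    case (5 q)
    then show ?thesis using Basis.prems
      by (intro exI[of _ "{}"] exI[of _ "{q}"]) (auto simp: basicM_def validD_def satD_def subF_def)
  qed
qed



definition "satP M p \<longleftrightarrow> fst p \<in> scarr M \<and> snd p \<in> scarr M \<and> (fst p, snd p) \<in> seqv M"
definition "satR M r \<longleftrightarrow> set (snd r) \<subseteq> scarr M \<and> map (cls M) (snd r) \<in> srel M (fst r)"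
definition "satF M q \<longleftrightarrow> set (fst (snd q)) \<subseteq> scarr M \<and> snd (snd q) \<in> scarr M
         \<and> sfun M (fst q) (map (cls M) (fst (snd q))) = cls M (snd (snd q))"

lemma satD_alt: "satD M Es Ps Rs Fs \<longleftrightarrow> (\<forall>a\<in>Es. a \<in> scarr M) \<and> (\<forall>p\<in>Ps. satP M p)
   \<and> (\<forall>r\<in>Rs. satR M r) \<and> (\<forall>q\<in>Fs. satF M q)"
  unfolding satD_def satP_def satR_def satF_def by blast

definition "trR c r = (fst r, map c (snd r))"
definition "trF c q = (fst q, map c (fst (snd q)), c (snd (snd q)))"

lemma transfer:
  assumes iso: "is_iso ar_f ar_r S M N g"
   and c: "\<forall>b\<in>F0. c b \<in> scarr M \<and> b \<in> scarr N \<and> g (cls M (c b)) = cls N b"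
   and r: "refs Es Ps Rs Fs \<subseteq> F0"
   and ar: "\<forall>q\<in>Fs. length (fst (snd q)) = ar_f (fst q)"
  shows "satD N Es Ps Rs Fs \<longleftrightarrow> satD M (c ` Es) (map_prod c c ` Ps) (trR c ` Rs) (trF c ` Fs)"
proof -
  have sM: "is_struct ar_f ar_r S M" using iso_s1[OF iso] .
  have sN: "is_struct ar_f ar_r S N" using iso_s2[OF iso] .
  have inj: "inj_on g (elems M)" using iso_bij[OF iso] by (simp add: bij_betw_def)
  have clsN: "cls N b = g (cls M (c b))" if "b \<in> F0" for b using c that by simp
  have cM: "c b \<in> scarr M" if "b \<in> F0" for b using c that by simp
  have bN: "b \<in> scarr N" if "b \<in> F0" for b using c that by simp
  have clsel: "cls M (c b) \<in> elems M" if "b \<in> F0" for b using cls_in_elems[OF sM cM[OF that]] .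
  have lst: "map (cls N) bs = map g (map (cls M) (map c bs)) \<and> set (map (cls M) (map c bs)) \<subseteq> elems M
     \<and> set bs \<subseteq> scarr N \<and> set (map c bs) \<subseteq> scarr M"
    if "set bs \<subseteq> F0" for bs
    using that clsN clsel cM bN by auto
  have PE: "\<forall>a\<in>Es. (a \<in> scarr N) = (c a \<in> scarr M)"
    using r cM bN unfolding refs_def by blast
  have PP: "\<forall>p\<in>Ps. satP N p = satP M (map_prod c c p)"
  proof
    fix p assume p: "p \<in> Ps"
    have f: "fst p \<in> F0" and s: "snd p \<in> F0" using p r unfolding refs_def by auto
    have "(fst p, snd p) \<in> seqv N \<longleftrightarrow> cls N (fst p) = cls N (snd p)"
      using cls_eq_iff[OF sN bN[OF f] bN[OF s]] by simp
    also have "\<dots> \<longleftrightarrow> cls M (c (fst p)) = cls M (c (snd p))"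
      using clsN[OF f] clsN[OF s] inj_on_eq_iff[OF inj clsel[OF f] clsel[OF s]] by simp
    also have "\<dots> \<longleftrightarrow> (c (fst p), c (snd p)) \<in> seqv M"
      using cls_eq_iff[OF sM cM[OF f] cM[OF s]] by simp
    finally show "satP N p = satP M (map_prod c c p)"
      unfolding satP_def using f s cM bN by (cases p) auto
  qed
  have PR: "\<forall>x\<in>Rs. satR N x = satR M (trR c x)"
  proof
    fix x assume x: "x \<in> Rs"
    have bs: "set (snd x) \<subseteq> F0" using x r unfolding refs_def by auto
    note l = lst[OF bs]
    have e: "map (cls N) (snd x) = map g (map (cls M) (map c (snd x)))" using l by blast
    have s: "set (map (cls M) (map c (snd x))) \<subseteq> elems M" using l by blast
    have "map (cls N) (snd x) \<in> srel N (fst x) \<longleftrightarrow> map g (map (cls M) (map c (snd x))) \<in> srel N (fst x)"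
      by (simp only: e)
    also have "\<dots> \<longleftrightarrow> map (cls M) (map c (snd x)) \<in> srel M (fst x)" using iso_rel[OF iso s] by blast
    finally have fin: "map (cls N) (snd x) \<in> srel N (fst x) \<longleftrightarrow> map (cls M) (map c (snd x)) \<in> srel M (fst x)" .
    have l3: "set (snd x) \<subseteq> scarr N" "set (map c (snd x)) \<subseteq> scarr M" using l by blast+
    show "satR N x = satR M (trR c x)" unfolding satR_def trR_def fst_conv snd_conv using l3 fin by blast
  qed
  have PF: "\<forall>x\<in>Fs. satF N x = satF M (trF c x)"
  proof
    fix x assume x: "x \<in> Fs"
    have bs: "set (fst (snd x)) \<subseteq> F0" and b: "snd (snd x) \<in> F0" using x r unfolding refs_def by auto
    note l = lst[OF bs]
    have len: "length (map (cls M) (map c (fst (snd x)))) = ar_f (fst x)" using ar x by simp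
    have sin: "sfun M (fst x) (map (cls M) (map c (fst (snd x)))) \<in> elems M"
      using sfun_in[OF sM len] l by blast
    have e: "map (cls N) (fst (snd x)) = map g (map (cls M) (map c (fst (snd x))))" using l by blast
    have s: "set (map (cls M) (map c (fst (snd x)))) \<subseteq> elems M" using l by blast
    have "sfun N (fst x) (map (cls N) (fst (snd x))) = sfun N (fst x) (map g (map (cls M) (map c (fst (snd x)))))"
      by (simp only: e)
    also have "\<dots> = g (sfun M (fst x) (map (cls M) (map c (fst (snd x)))))"
      using iso_fun[OF iso len s] by simp
    finally have e2: "sfun N (fst x) (map (cls N) (fst (snd x))) = g (sfun M (fst x) (map (cls M) (map c (fst (snd x)))))" .
    have fin: "sfun N (fst x) (map (cls N) (fst (snd x))) = cls N (snd (snd x))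
       \<longleftrightarrow> sfun M (fst x) (map (cls M) (map c (fst (snd x)))) = cls M (c (snd (snd x)))"
      unfolding e2 clsN[OF b] using inj_on_eq_iff[OF inj sin clsel[OF b]] .
    have l3: "set (fst (snd x)) \<subseteq> scarr N" "set (map c (fst (snd x))) \<subseteq> scarr M" using l by blast+
    show "satF N x = satF M (trF c x)" unfolding satF_def trF_def fst_conv snd_conv
      using l3 fin cM[OF b] bN[OF b] by blast
  qed
  show ?thesis unfolding satD_alt ball_simps using PE PP PR PF by blast
qed



definition "basicI ar_f ar_r S U1 V1 P = {q \<in> ISig ar_f ar_r S. idom q \<in> U1 \<and> icod q \<in> V1 \<and>
   (\<forall>p\<in>P. fst p \<in> scarr (idom q) \<and> snd p \<in> scarr (icod q)
          \<and> imap q (cls (idom q) (fst p)) = cls (icod q) (snd p))}"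

lemma ISig_iso: "q \<in> ISig ar_f ar_r S \<Longrightarrow> is_iso ar_f ar_r S (idom q) (icod q) (imap q)"
  by (cases q) (simp add: ISig_def idom_def icod_def imap_def)

lemma ISig_MSig: "q \<in> ISig ar_f ar_r S \<Longrightarrow> idom q \<in> MSig ar_f ar_r S \<and> icod q \<in> MSig ar_f ar_r S"
  using ISig_iso iso_s1 iso_s2 unfolding MSig_def by blast

lemma ISig_mem: "is_iso ar_f ar_r S M N g \<Longrightarrow> (M, N, g) \<in> ISig ar_f ar_r S"
  by (simp add: ISig_def)

lemma nbhd_I:
  assumes "generate_topology_on (ISub ar_f ar_r S) G"
  shows "q \<in> G \<Longrightarrow> \<exists>U1 V1 P. openin (MTop ar_f ar_r S) U1 \<and> openin (MTop ar_f ar_r S) V1 \<and> finite P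
          \<and> q \<in> basicI ar_f ar_r S U1 V1 P \<and> basicI ar_f ar_r S U1 V1 P \<subseteq> G"
  using assms
proof (induction arbitrary: q rule: generate_topology_on.induct)
  case Empty then show ?case by simp
next
  case (Int a b)
  obtain U1 V1 P where 1: "openin (MTop ar_f ar_r S) U1" "openin (MTop ar_f ar_r S) V1" "finite P"
     "q \<in> basicI ar_f ar_r S U1 V1 P" "basicI ar_f ar_r S U1 V1 P \<subseteq> a"
    using Int.IH(1)[of q] Int.prems by blast
  obtain U1' V1' P' where 2: "openin (MTop ar_f ar_r S) U1'" "openin (MTop ar_f ar_r S) V1'" "finite P'"
     "q \<in> basicI ar_f ar_r S U1' V1' P'" "basicI ar_f ar_r S U1' V1' P' \<subseteq> b"
    using Int.IH(2)[of q] Int.prems by blast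
  have e: "basicI ar_f ar_r S (U1 \<inter> U1') (V1 \<inter> V1') (P \<union> P') =
      basicI ar_f ar_r S U1 V1 P \<inter> basicI ar_f ar_r S U1' V1' P'"
    unfolding basicI_def by blast
  have o1: "openin (MTop ar_f ar_r S) (U1 \<inter> U1')" by (rule openin_Int[OF 1(1) 2(1)])
  have o2: "openin (MTop ar_f ar_r S) (V1 \<inter> V1')" by (rule openin_Int[OF 1(2) 2(2)])
  have f: "finite (P \<union> P')" using 1(3) 2(3) by simp
  have m: "q \<in> basicI ar_f ar_r S (U1 \<inter> U1') (V1 \<inter> V1') (P \<union> P')" using e 1(4) 2(4) by simp
  have su: "basicI ar_f ar_r S (U1 \<inter> U1') (V1 \<inter> V1') (P \<union> P') \<subseteq> a \<inter> b" using e 1(5) 2(5) by blast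
  show ?case using o1 o2 f m su by blast
next
  case (UN K)
  then obtain k where k: "k \<in> K" "q \<in> k" by blast
  have "\<exists>U1 V1 P. openin (MTop ar_f ar_r S) U1 \<and> openin (MTop ar_f ar_r S) V1 \<and> finite P
          \<and> q \<in> basicI ar_f ar_r S U1 V1 P \<and> basicI ar_f ar_r S U1 V1 P \<subseteq> k"
    using UN.IH[OF k] .
  then obtain U1 V1 P where h: "openin (MTop ar_f ar_r S) U1" "openin (MTop ar_f ar_r S) V1" "finite P"
     "q \<in> basicI ar_f ar_r S U1 V1 P" "basicI ar_f ar_r S U1 V1 P \<subseteq> k" by blast
  have "k \<subseteq> \<Union>K" using k(1) by blast
  then show ?case using h by blast
next
  case (Basis s)
  have MO: "openin (MTop ar_f ar_r S) (MSig ar_f ar_r S)" by (rule MSig_open)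
  consider "s = ISig ar_f ar_r S"
    | U where "openin (MTop ar_f ar_r S) U" "s = {p \<in> ISig ar_f ar_r S. idom p \<in> U}"
    | U where "openin (MTop ar_f ar_r S) U" "s = {p \<in> ISig ar_f ar_r S. icod p \<in> U}"
    | a b where "s = {p \<in> ISig ar_f ar_r S. a \<in> scarr (idom p) \<and> b \<in> scarr (icod p)
          \<and> imap p (cls (idom p) a) = cls (icod p) b}"
    using Basis.hyps unfolding ISub_def by blast
  then show ?case
  proof cases
    case 1
    have "basicI ar_f ar_r S (MSig ar_f ar_r S) (MSig ar_f ar_r S) {} = s"
      unfolding basicI_def 1 using ISig_MSig by blast
    then show ?thesis using Basis.prems MO by blast
  next
    case (2 U)
    have "basicI ar_f ar_r S U (MSig ar_f ar_r S) {} = s"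
      unfolding basicI_def 2 using ISig_MSig by blast
    then show ?thesis using Basis.prems MO 2 by blast
  next
    case (3 U)
    have "basicI ar_f ar_r S (MSig ar_f ar_r S) U {} = s"
      unfolding basicI_def 3 using ISig_MSig by blast
    then show ?thesis using Basis.prems MO 3 by blast
  next
    case (4 a b)
    have "basicI ar_f ar_r S (MSig ar_f ar_r S) (MSig ar_f ar_r S) {(a, b)} = s"
    proof -
      have A: "\<forall>q\<in>ISig ar_f ar_r S. idom q \<in> MSig ar_f ar_r S \<and> icod q \<in> MSig ar_f ar_r S"
        using ISig_MSig by blast
      show ?thesis unfolding basicI_def 4 using A by auto
    qed
    moreover have "finite {(a, b)}" by simp
    ultimately show ?thesis using Basis.prems MO by blast
  qed
qed

lemma iso_inv:
  assumes iso: "is_iso ar_f ar_r S M N g"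
  shows "\<exists>h. is_iso ar_f ar_r S N M h \<and> (\<forall>X\<in>elems M. h (g X) = X)"
proof -
  have bij: "bij_betw g (elems M) (elems N)" using iso_bij[OF iso] .
  have sM: "is_struct ar_f ar_r S M" using iso_s1[OF iso] .
  have sN: "is_struct ar_f ar_r S N" using iso_s2[OF iso] .
  define h where "h = (\<lambda>Y. if Y \<in> elems N then inv_into (elems M) g Y else {})"
  have surj: "g ` elems M = elems N" using bij by (simp add: bij_betw_def)
  have inj: "inj_on g (elems M)" using bij by (simp add: bij_betw_def)
  have hin: "h Y \<in> elems M" if "Y \<in> elems N" for Y
    using that surj inv_into_into[of Y g "elems M"] unfolding h_def by simp
  have gh: "g (h Y) = Y" if "Y \<in> elems N" for Y
    using that surj f_inv_into_f[of Y g "elems M"] unfolding h_def by simp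
  have hg: "h (g X) = X" if "X \<in> elems M" for X
  proof -
    have "g X \<in> elems N" using that surj by blast
    then show ?thesis unfolding h_def using inv_into_f_f[OF inj that] by simp
  qed
  have bijh: "bij_betw h (elems N) (elems M)"
  proof -
    have "bij_betw (inv_into (elems M) g) (elems N) (elems M)" using bij_betw_inv_into[OF bij] .
    moreover have "bij_betw h (elems N) (elems M) = bij_betw (inv_into (elems M) g) (elems N) (elems M)"
      by (rule bij_betw_cong) (simp add: h_def)
    ultimately show ?thesis by simp
  qed
  have "is_iso ar_f ar_r S N M h"
    unfolding is_iso_def
  proof (intro conjI allI impI)
    show "is_struct ar_f ar_r S N" by fact
    show "is_struct ar_f ar_r S M" by fact
    show "bij_betw h (elems N) (elems M)" by fact
  next
    fix x assume "x \<notin> elems N" then show "h x = {}" by (simp add: h_def)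
  next
    fix R ys assume ys: "set ys \<subseteq> elems N"
    have s: "set (map h ys) \<subseteq> elems M" using ys hin by auto
    have m: "map g (map h ys) = ys" unfolding map_map by (rule map_idI) (use ys gh in auto)
    have r: "(map h ys \<in> srel M R) = (map g (map h ys) \<in> srel N R)" using iso_rel[OF iso s] .
    show "(ys \<in> srel N R) = (map h ys \<in> srel M R)" using r unfolding m by blast
  next
    fix f ys assume ys: "length ys = ar_f f \<and> set ys \<subseteq> elems N"
    have s: "set (map h ys) \<subseteq> elems M" using ys hin by auto
    have m: "map g (map h ys) = ys" unfolding map_map by (rule map_idI) (use ys gh in auto)
    have l: "length (map h ys) = ar_f f" using ys by simp
    have e: "g (sfun M f (map h ys)) = sfun N f ys" using iso_fun[OF iso l s] m by simp
    have "sfun M f (map h ys) \<in> elems M" using sfun_in[OF sM l s] .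
    then have "h (g (sfun M f (map h ys))) = sfun M f (map h ys)" by (rule hg)
    then show "h (sfun N f ys) = sfun M f (map h ys)" unfolding e .
  qed
  then show ?thesis using hg by blast
qed

lemma validD_finite_refs: "validD ar_f ar_r S Es Ps Rs Fs \<Longrightarrow> finite (refs Es Ps Rs Fs)"
  unfolding validD_def refs_def by auto

lemma satD_refs: "satD M Es Ps Rs Fs \<Longrightarrow> refs Es Ps Rs Fs \<subseteq> scarr M"
  unfolding satD_def refs_def by auto

lemma refsI1: "b \<in> Es \<Longrightarrow> b \<in> refs Es Ps Rs Fs" unfolding refs_def by simp
lemma refsI2: "p \<in> Ps \<Longrightarrow> fst p \<in> refs Es Ps Rs Fs" unfolding refs_def by simp
lemma refsI3: "p \<in> Ps \<Longrightarrow> snd p \<in> refs Es Ps Rs Fs" unfolding refs_def by simp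
lemma refsI4: "r \<in> Rs \<Longrightarrow> b \<in> set (snd r) \<Longrightarrow> b \<in> refs Es Ps Rs Fs" unfolding refs_def by blast
lemma refsI5: "q \<in> Fs \<Longrightarrow> snd (snd q) \<in> refs Es Ps Rs Fs" unfolding refs_def by blast
lemma refsI6: "q \<in> Fs \<Longrightarrow> b \<in> set (fst (snd q)) \<Longrightarrow> b \<in> refs Es Ps Rs Fs" unfolding refs_def by blast

lemma refs_tr_mem:
  assumes b: "b \<in> refs Es Ps Rs Fs"
  shows "c b \<in> refs (c ` Es) (map_prod c c ` Ps) (trR c ` Rs) (trF c ` Fs)"
proof -
  have "b \<in> Es \<or> (\<exists>p\<in>Ps. b = fst p) \<or> (\<exists>p\<in>Ps. b = snd p) \<or> (\<exists>r\<in>Rs. b \<in> set (snd r))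
     \<or> (\<exists>q\<in>Fs. b = snd (snd q)) \<or> (\<exists>q\<in>Fs. b \<in> set (fst (snd q)))"
    using b unfolding refs_def by blast
  then show ?thesis
  proof (elim disjE bexE)
    assume "b \<in> Es" then show ?thesis by (intro refsI1) simp
  next
    fix p assume p: "p \<in> Ps" "b = fst p"
    have "map_prod c c p \<in> map_prod c c ` Ps" using p by simp
    then have "fst (map_prod c c p) \<in> refs (c ` Es) (map_prod c c ` Ps) (trR c ` Rs) (trF c ` Fs)" by (rule refsI2)
    then show ?thesis using p by (cases p) simp
  next
    fix p assume p: "p \<in> Ps" "b = snd p"
    have "map_prod c c p \<in> map_prod c c ` Ps" using p by simp
    then have "snd (map_prod c c p) \<in> refs (c ` Es) (map_prod c c ` Ps) (trR c ` Rs) (trF c ` Fs)" by (rule refsI3)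
    then show ?thesis using p by (cases p) simp
  next
    fix r assume r: "r \<in> Rs" "b \<in> set (snd r)"
    have "trR c r \<in> trR c ` Rs" using r by simp
    moreover have "c b \<in> set (snd (trR c r))" using r by (simp add: trR_def)
    ultimately show ?thesis by (rule refsI4)
  next
    fix q assume q: "q \<in> Fs" "b = snd (snd q)"
    have "trF c q \<in> trF c ` Fs" using q by simp
    then have "snd (snd (trF c q)) \<in> refs (c ` Es) (map_prod c c ` Ps) (trR c ` Rs) (trF c ` Fs)" by (rule refsI5)
    then show ?thesis using q by (simp add: trF_def)
  next
    fix q assume q: "q \<in> Fs" "b \<in> set (fst (snd q))"
    have "trF c q \<in> trF c ` Fs" using q by simp
    moreover have "c b \<in> set (fst (snd (trF c q)))" using q by (simp add: trF_def)
    ultimately show ?thesis by (rule refsI6)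
  qed
qed

lemma validD_tr:
  assumes "validD ar_f ar_r S Es Ps Rs Fs" "\<forall>b\<in>refs Es Ps Rs Fs. c b \<in> S"
  shows "validD ar_f ar_r S (c ` Es) (map_prod c c ` Ps) (trR c ` Rs) (trF c ` Fs)"
proof -
  have fin: "finite Es" "finite Ps" "finite Rs" "finite Fs"
    and vR: "\<forall>r\<in>Rs. length (snd r) = ar_r (fst r)"
    and vF: "\<forall>q\<in>Fs. length (fst (snd q)) = ar_f (fst q)"
    using assms(1) unfolding validD_def by blast+
  have cS: "c b \<in> S" if "b \<in> refs Es Ps Rs Fs" for b using assms(2) that by blast
  have 1: "finite (c ` Es) \<and> finite (map_prod c c ` Ps) \<and> finite (trR c ` Rs) \<and> finite (trF c ` Fs)"
    using fin by simp
  have 2: "c ` Es \<subseteq> S"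
  proof
    fix y assume "y \<in> c ` Es"
    then obtain b where b: "b \<in> Es" "y = c b" by blast
    show "y \<in> S" using cS[OF refsI1[OF b(1)]] b(2) by simp
  qed
  have 3: "\<forall>p\<in>Ps. fst (map_prod c c p) \<in> S \<and> snd (map_prod c c p) \<in> S"
  proof
    fix p assume p: "p \<in> Ps"
    show "fst (map_prod c c p) \<in> S \<and> snd (map_prod c c p) \<in> S"
      using cS[OF refsI2[OF p]] cS[OF refsI3[OF p]] by (cases p) simp
  qed
  have 4: "\<forall>r\<in>Rs. length (snd (trR c r)) = ar_r (fst (trR c r)) \<and> set (snd (trR c r)) \<subseteq> S"
  proof
    fix r assume r: "r \<in> Rs"
    have l: "length (snd r) = ar_r (fst r)" using vR r by blast
    have s: "\<forall>b\<in>set (snd r). c b \<in> S" using cS refsI4[OF r] by blast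
    show "length (snd (trR c r)) = ar_r (fst (trR c r)) \<and> set (snd (trR c r)) \<subseteq> S"
      using l s unfolding trR_def by auto
  qed
  have 5: "\<forall>q\<in>Fs. length (fst (snd (trF c q))) = ar_f (fst (trF c q)) \<and> set (fst (snd (trF c q))) \<subseteq> S
     \<and> snd (snd (trF c q)) \<in> S"
  proof
    fix q assume q: "q \<in> Fs"
    have l: "length (fst (snd q)) = ar_f (fst q)" using vF q by blast
    have s: "\<forall>b\<in>set (fst (snd q)). c b \<in> S" using cS refsI6[OF q] by blast
    have t: "c (snd (snd q)) \<in> S" using cS refsI5[OF q] by blast
    show "length (fst (snd (trF c q))) = ar_f (fst (trF c q)) \<and> set (fst (snd (trF c q))) \<subseteq> S
     \<and> snd (snd (trF c q)) \<in> S"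
      using l s t unfolding trF_def by auto
  qed
  show ?thesis unfolding validD_def ball_simps using 1 2 3 4 5 by blast
qed



lemma satD_Q: "satD M {} Q {} {} \<longleftrightarrow> (\<forall>p\<in>Q. fst p \<in> scarr M \<and> snd p \<in> scarr M \<and> (fst p, snd p) \<in> seqv M)"
  by (simp add: satD_def)

lemma struct_S: "is_struct ar_f ar_r S M \<Longrightarrow> scarr M \<subseteq> S"
  by (simp add: is_struct_def)

lemma MSig_struct: "M \<in> MSig ar_f ar_r S \<longleftrightarrow> is_struct ar_f ar_r S M"
  by (simp add: MSig_def)

lemma MT_MSig: "M \<in> MT ar_f ar_r S T \<Longrightarrow> M \<in> MSig ar_f ar_r S"
  by (simp add: MT_def)

lemma IT_iff: "p \<in> IT ar_f ar_r S T \<longleftrightarrow> p \<in> ISig ar_f ar_r S \<and> idom p \<in> MT ar_f ar_r S T \<and> icod p \<in> MT ar_f ar_r S T"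
  by (simp add: IT_def)

lemma basicI_mem: "(M, N, g) \<in> basicI ar_f ar_r S U1 V1 P \<longleftrightarrow> (M, N, g) \<in> ISig ar_f ar_r S \<and> M \<in> U1 \<and> N \<in> V1 \<and>
   (\<forall>p\<in>P. fst p \<in> scarr M \<and> snd p \<in> scarr N \<and> g (cls M (fst p)) = cls N (snd p))"
  by (simp add: basicI_def idom_def icod_def imap_def)

lemma surj_cls:
  assumes iso: "is_iso ar_f ar_r S M N f" and b: "b \<in> scarr N"
  shows "\<exists>a. a \<in> scarr M \<and> f (cls M a) = cls N b"
proof -
  have sM: "is_struct ar_f ar_r S M" using iso_s1[OF iso] .
  have sN: "is_struct ar_f ar_r S N" using iso_s2[OF iso] .
  have "cls N b \<in> elems N" using cls_in_elems[OF sN b] .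
  then have "cls N b \<in> f ` elems M" using iso_bij[OF iso] by (simp add: bij_betw_def)
  then obtain X where X: "X \<in> elems M" "cls N b = f X" by blast
  obtain a where a: "a \<in> scarr M" "X = cls M a" using elems_cls[OF sM X(1)] by blast
  show ?thesis using X a by blast
qed

lemma iso_cls_eq:
  assumes iso: "is_iso ar_f ar_r S M N f" and a: "a \<in> scarr M" and b: "b \<in> scarr M"
  shows "f (cls M a) = f (cls M b) \<longleftrightarrow> (a, b) \<in> seqv M"
proof -
  have sM: "is_struct ar_f ar_r S M" using iso_s1[OF iso] .
  have inj: "inj_on f (elems M)" using iso_bij[OF iso] by (simp add: bij_betw_def)
  have "f (cls M a) = f (cls M b) \<longleftrightarrow> cls M a = cls M b"
    using inj_on_eq_iff[OF inj cls_in_elems[OF sM a] cls_in_elems[OF sM b]] .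
  also have "\<dots> \<longleftrightarrow> (a, b) \<in> seqv M" using cls_eq_iff[OF sM a b] .
  finally show ?thesis .
qed

lemma idom_open:
  assumes inf: "infinite S" and geo: "geometric_theory ar_f ar_r T"
  shows "open_map (subtopology (ITop ar_f ar_r S) (IT ar_f ar_r S T))
                  (subtopology (MTop ar_f ar_r S) (MT ar_f ar_r S T)) idom"
  unfolding open_map_def
proof (intro allI impI)
  fix U assume "openin (subtopology (ITop ar_f ar_r S) (IT ar_f ar_r S T)) U"
  then obtain G where G: "openin (ITop ar_f ar_r S) G" and UG: "U = G \<inter> IT ar_f ar_r S T"
    unfolding openin_subtopology by blast
  have genG: "generate_topology_on (ISub ar_f ar_r S) G"
    using G unfolding ITop_def openin_topology_generated_by_iff .
  show "openin (subtopology (MTop ar_f ar_r S) (MT ar_f ar_r S T)) (idom ` U)"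
  proof (subst openin_subopen, intro ballI)
    fix x assume "x \<in> idom ` U"
    then obtain p where pU: "p \<in> U" and xp: "x = idom p" by blast
    have pG: "p \<in> G" and pIT: "p \<in> IT ar_f ar_r S T" using pU UG by auto
    have pI: "p \<in> ISig ar_f ar_r S" and MMT: "idom p \<in> MT ar_f ar_r S T"
      using pIT unfolding IT_iff by auto
    define M where "M = idom p"
    define N where "N = icod p"
    define f where "f = imap p"
    have pe: "p = (M, N, f)" unfolding M_def N_def f_def idom_def icod_def imap_def by simp
    have iso: "is_iso ar_f ar_r S M N f" using ISig_iso[OF pI] unfolding M_def N_def f_def .
    have sM: "is_struct ar_f ar_r S M" using iso_s1[OF iso] .
    have sN: "is_struct ar_f ar_r S N" using iso_s2[OF iso] .
    obtain U1 V1 P where o1: "openin (MTop ar_f ar_r S) U1" and o2: "openin (MTop ar_f ar_r S) V1"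
      and fP: "finite P" and pB: "p \<in> basicI ar_f ar_r S U1 V1 P" and BG: "basicI ar_f ar_r S U1 V1 P \<subseteq> G"
      using nbhd_I[OF genG pG] by blast
    have pB': "(M, N, f) \<in> basicI ar_f ar_r S U1 V1 P" using pB pe by simp
    have MU1: "M \<in> U1" and NV1: "N \<in> V1"
      and Pp: "\<forall>pr\<in>P. fst pr \<in> scarr M \<and> snd pr \<in> scarr N \<and> f (cls M (fst pr)) = cls N (snd pr)"
      using pB' unfolding basicI_mem by auto
    have genV: "generate_topology_on (MSub ar_f ar_r S) V1"
      using o2 unfolding MTop_def openin_topology_generated_by_iff .
    obtain Es Ps Rs Fs where vD: "validD ar_f ar_r S Es Ps Rs Fs"
      and NB: "N \<in> basicM ar_f ar_r S Es Ps Rs Fs" and BV: "basicM ar_f ar_r S Es Ps Rs Fs \<subseteq> V1"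
      using nbhd_M[OF genV NV1] by blast
    have satN: "satD N Es Ps Rs Fs" using NB unfolding basicM_def by simp
    define F0 where "F0 = refs Es Ps Rs Fs \<union> snd ` P"
    have finF0: "finite F0" using validD_finite_refs[OF vD] fP unfolding F0_def by simp
    have F0N: "F0 \<subseteq> scarr N" using satD_refs[OF satN] Pp unfolding F0_def by auto
    have MS: "scarr M \<subseteq> S" using struct_S[OF sM] .
    have NS: "scarr N \<subseteq> S" using struct_S[OF sN] .
    have "\<forall>b\<in>F0. \<exists>a. a \<in> scarr M \<and> f (cls M a) = cls N b"
    proof
      fix b assume "b \<in> F0"
      then have "b \<in> scarr N" using F0N by blast
      then show "\<exists>a. a \<in> scarr M \<and> f (cls M a) = cls N b" using surj_cls[OF iso] by blast
    qed
    from bchoice[OF this] obtain c where c: "\<forall>b\<in>F0. c b \<in> scarr M \<and> f (cls M (c b)) = cls N b" by blast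
    have cc: "\<forall>b\<in>F0. c b \<in> scarr M \<and> b \<in> scarr N \<and> f (cls M (c b)) = cls N b" using c F0N by blast
    have refsF0: "refs Es Ps Rs Fs \<subseteq> F0" unfolding F0_def by blast
    have arF: "\<forall>q\<in>Fs. length (fst (snd q)) = ar_f (fst q)" using vD unfolding validD_def by blast
    have satM: "satD M (c ` Es) (map_prod c c ` Ps) (trR c ` Rs) (trF c ` Fs)"
      using transfer[OF iso cc refsF0 arF] satN by blast
    define Q where "Q = (\<lambda>pr. (fst pr, c (snd pr))) ` P"
    have cS: "\<forall>b\<in>refs Es Ps Rs Fs. c b \<in> S"
    proof
      fix b assume "b \<in> refs Es Ps Rs Fs"
      then have "b \<in> F0" using refsF0 by blast
      then show "c b \<in> S" using cc MS by blast
    qed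
    have vT: "validD ar_f ar_r S (c ` Es) (map_prod c c ` Ps) (trR c ` Rs) (trF c ` Fs)"
      using validD_tr[OF vD cS] .
    have PF0: "snd pr \<in> F0" if "pr \<in> P" for pr using that unfolding F0_def by blast
    have vQ: "validD ar_f ar_r S {} Q {} {}"
    proof -
      have "finite Q" using fP unfolding Q_def by simp
      moreover have "\<forall>pr\<in>Q. fst pr \<in> S \<and> snd pr \<in> S"
      proof
        fix q assume "q \<in> Q"
        then obtain pr where pr: "pr \<in> P" "q = (fst pr, c (snd pr))" unfolding Q_def by blast
        have "fst pr \<in> scarr M" using Pp pr(1) by blast
        moreover have "c (snd pr) \<in> scarr M" using cc PF0[OF pr(1)] by blast
        ultimately show "fst q \<in> S \<and> snd q \<in> S" using pr(2) MS by auto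
      qed
      ultimately show ?thesis unfolding validD_def by simp
    qed
    define W where "W = U1 \<inter> basicM ar_f ar_r S (c ` Es) (map_prod c c ` Ps) (trR c ` Rs) (trF c ` Fs)
       \<inter> basicM ar_f ar_r S {} Q {} {}"
    have oW: "openin (MTop ar_f ar_r S) W"
      unfolding W_def using o1 basicM_open[OF vT] basicM_open[OF vQ] by (intro openin_Int)
    have satMQ: "satD M {} Q {} {}"
      unfolding satD_Q
    proof
      fix q assume "q \<in> Q"
      then obtain pr where pr: "pr \<in> P" "q = (fst pr, c (snd pr))" unfolding Q_def by blast
      have a: "fst pr \<in> scarr M" and e1: "f (cls M (fst pr)) = cls N (snd pr)" using Pp pr(1) by blast+
      have b: "c (snd pr) \<in> scarr M" and e2: "f (cls M (c (snd pr))) = cls N (snd pr)"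
        using cc PF0[OF pr(1)] by blast+
      have "(fst pr, c (snd pr)) \<in> seqv M" using iso_cls_eq[OF iso a b] e1 e2 by simp
      then show "fst q \<in> scarr M \<and> snd q \<in> scarr M \<and> (fst q, snd q) \<in> seqv M" using a b pr(2) by simp
    qed
    have MSig: "M \<in> MSig ar_f ar_r S" using sM MSig_struct by blast
    have MW: "M \<in> W" unfolding W_def basicM_def using MU1 MSig satM satMQ by blast
    show "\<exists>T'. openin (subtopology (MTop ar_f ar_r S) (MT ar_f ar_r S T)) T' \<and> x \<in> T' \<and> T' \<subseteq> idom ` U"
    proof (intro exI conjI)
      show "openin (subtopology (MTop ar_f ar_r S) (MT ar_f ar_r S T)) (W \<inter> MT ar_f ar_r S T)"
        unfolding openin_subtopology using oW by blast
      show "x \<in> W \<inter> MT ar_f ar_r S T" using MW MMT xp unfolding M_def by simp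
      show "W \<inter> MT ar_f ar_r S T \<subseteq> idom ` U"
      proof
        fix M' assume M': "M' \<in> W \<inter> MT ar_f ar_r S T"
        have M'MT: "M' \<in> MT ar_f ar_r S T" using M' by blast
        have sM': "is_struct ar_f ar_r S M'" using MT_MSig[OF M'MT] MSig_struct by blast
        have M'U1: "M' \<in> U1" using M' unfolding W_def by blast
        have satT': "satD M' (c ` Es) (map_prod c c ` Ps) (trR c ` Rs) (trF c ` Fs)"
          using M' unfolding W_def basicM_def by blast
        have satQ': "satD M' {} Q {} {}" using M' unfolding W_def basicM_def by blast
        have Q': "\<forall>q\<in>Q. fst q \<in> scarr M' \<and> snd q \<in> scarr M' \<and> (fst q, snd q) \<in> seqv M'"
          using satQ' unfolding satD_Q .
        have Qp: "fst pr \<in> scarr M' \<and> c (snd pr) \<in> scarr M' \<and> (fst pr, c (snd pr)) \<in> seqv M'"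
          if "pr \<in> P" for pr
        proof -
          have "(fst pr, c (snd pr)) \<in> Q" using that unfolding Q_def by blast
          then show ?thesis using Q' by fastforce
        qed
        have cM': "\<forall>b\<in>F0. c b \<in> scarr M'"
        proof
          fix b assume b: "b \<in> F0"
          show "c b \<in> scarr M'"
          proof (cases "b \<in> refs Es Ps Rs Fs")
            case True
            have "c b \<in> refs (c ` Es) (map_prod c c ` Ps) (trR c ` Rs) (trF c ` Fs)"
              using refs_tr_mem[OF True] .
            then show ?thesis using satD_refs[OF satT'] by blast
          next
            case False
            then have "b \<in> snd ` P" using b unfolding F0_def by blast
            then obtain pr where "pr \<in> P" "b = snd pr" by blast
            then show ?thesis using Qp by blast
          qed
        qed
        have F0S: "F0 \<subseteq> S" using F0N NS by blast
        obtain N' g where iso': "is_iso ar_f ar_r S M' N' g"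
          and gc: "\<forall>b\<in>F0. b \<in> scarr N' \<and> g (cls M' (c b)) = cls N' b"
          using construct[OF sM' inf finF0 F0S cM'] by blast
        have cc': "\<forall>b\<in>F0. c b \<in> scarr M' \<and> b \<in> scarr N' \<and> g (cls M' (c b)) = cls N' b"
          using cM' gc by blast
        have satN': "satD N' Es Ps Rs Fs" using transfer[OF iso' cc' refsF0 arF] satT' by blast
        have N'Sig: "N' \<in> MSig ar_f ar_r S" using iso_s2[OF iso'] MSig_struct by blast
        have N'V1: "N' \<in> V1" using N'Sig satN' BV unfolding basicM_def by blast
        have N'MT: "N' \<in> MT ar_f ar_r S T" using MT_iso[OF iso' M'MT geo] .
        have Pq: "\<forall>pr\<in>P. fst pr \<in> scarr M' \<and> snd pr \<in> scarr N' \<and> g (cls M' (fst pr)) = cls N' (snd pr)"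
        proof
          fix pr assume pr: "pr \<in> P"
          have q: "fst pr \<in> scarr M'" "c (snd pr) \<in> scarr M'" "(fst pr, c (snd pr)) \<in> seqv M'"
            using Qp[OF pr] by blast+
          have "cls M' (fst pr) = cls M' (c (snd pr))" using cls_eq_iff[OF sM' q(1) q(2)] q(3) by simp
          moreover have "snd pr \<in> scarr N' \<and> g (cls M' (c (snd pr))) = cls N' (snd pr)"
            using gc PF0[OF pr] by blast
          ultimately show "fst pr \<in> scarr M' \<and> snd pr \<in> scarr N' \<and> g (cls M' (fst pr)) = cls N' (snd pr)"
            using q(1) by simp
        qed
        have qI: "(M', N', g) \<in> ISig ar_f ar_r S" using ISig_mem[OF iso'] .
        have qB: "(M', N', g) \<in> basicI ar_f ar_r S U1 V1 P"
          unfolding basicI_mem using qI M'U1 N'V1 Pq by blast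
        have qG: "(M', N', g) \<in> G" using qB BG by blast
        have qIT: "(M', N', g) \<in> IT ar_f ar_r S T"
          unfolding IT_iff idom_def icod_def using qI M'MT N'MT by simp
        have "(M', N', g) \<in> U" using qG qIT UG by blast
        moreover have "idom (M', N', g) = M'" by (simp add: idom_def)
        ultimately show "M' \<in> idom ` U" by (metis image_eqI)
      qed
    qed
  qed
qed

lemma icod_open:
  assumes inf: "infinite S" and geo: "geometric_theory ar_f ar_r T"
  shows "open_map (subtopology (ITop ar_f ar_r S) (IT ar_f ar_r S T))
                  (subtopology (MTop ar_f ar_r S) (MT ar_f ar_r S T)) icod"
  unfolding open_map_def
proof (intro allI impI)
  fix U assume "openin (subtopology (ITop ar_f ar_r S) (IT ar_f ar_r S T)) U"
  then obtain G where G: "openin (ITop ar_f ar_r S) G" and UG: "U = G \<inter> IT ar_f ar_r S T"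
    unfolding openin_subtopology by blast
  have genG: "generate_topology_on (ISub ar_f ar_r S) G"
    using G unfolding ITop_def openin_topology_generated_by_iff .
  show "openin (subtopology (MTop ar_f ar_r S) (MT ar_f ar_r S T)) (icod ` U)"
  proof (subst openin_subopen, intro ballI)
    fix x assume "x \<in> icod ` U"
    then obtain p where pU: "p \<in> U" and xp: "x = icod p" by blast
    have pG: "p \<in> G" and pIT: "p \<in> IT ar_f ar_r S T" using pU UG by auto
    have pI: "p \<in> ISig ar_f ar_r S" and NMT: "icod p \<in> MT ar_f ar_r S T"
      using pIT unfolding IT_iff by auto
    define M where "M = idom p"
    define N where "N = icod p"
    define f where "f = imap p"
    have pe: "p = (M, N, f)" unfolding M_def N_def f_def idom_def icod_def imap_def by simp
    have iso: "is_iso ar_f ar_r S M N f" using ISig_iso[OF pI] unfolding M_def N_def f_def .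
    have sM: "is_struct ar_f ar_r S M" using iso_s1[OF iso] .
    have sN: "is_struct ar_f ar_r S N" using iso_s2[OF iso] .
    obtain fi where isofi: "is_iso ar_f ar_r S N M fi" and fif: "\<forall>X\<in>elems M. fi (f X) = X"
      using iso_inv[OF iso] by blast
    obtain U1 V1 P where o1: "openin (MTop ar_f ar_r S) U1" and o2: "openin (MTop ar_f ar_r S) V1"
      and fP: "finite P" and pB: "p \<in> basicI ar_f ar_r S U1 V1 P" and BG: "basicI ar_f ar_r S U1 V1 P \<subseteq> G"
      using nbhd_I[OF genG pG] by blast
    have pB': "(M, N, f) \<in> basicI ar_f ar_r S U1 V1 P" using pB pe by simp
    have MU1: "M \<in> U1" and NV1: "N \<in> V1"
      and Pp: "\<forall>pr\<in>P. fst pr \<in> scarr M \<and> snd pr \<in> scarr N \<and> f (cls M (fst pr)) = cls N (snd pr)"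
      using pB' unfolding basicI_mem by auto
    have genU: "generate_topology_on (MSub ar_f ar_r S) U1"
      using o1 unfolding MTop_def openin_topology_generated_by_iff .
    obtain Es Ps Rs Fs where vD: "validD ar_f ar_r S Es Ps Rs Fs"
      and MB: "M \<in> basicM ar_f ar_r S Es Ps Rs Fs" and BU: "basicM ar_f ar_r S Es Ps Rs Fs \<subseteq> U1"
      using nbhd_M[OF genU MU1] by blast
    have satM: "satD M Es Ps Rs Fs" using MB unfolding basicM_def by simp
    define F0 where "F0 = refs Es Ps Rs Fs \<union> fst ` P"
    have finF0: "finite F0" using validD_finite_refs[OF vD] fP unfolding F0_def by simp
    have F0M: "F0 \<subseteq> scarr M" using satD_refs[OF satM] Pp unfolding F0_def by auto
    have MS: "scarr M \<subseteq> S" using struct_S[OF sM] .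
    have NS: "scarr N \<subseteq> S" using struct_S[OF sN] .
    have "\<forall>a\<in>F0. \<exists>b. b \<in> scarr N \<and> fi (cls N b) = cls M a \<and> f (cls M a) = cls N b"
    proof
      fix a assume "a \<in> F0"
      then have a: "a \<in> scarr M" using F0M by blast
      obtain b where b: "b \<in> scarr N" "fi (cls N b) = cls M a" using surj_cls[OF isofi a] by blast
      have "f (cls M a) = cls N b"
      proof -
        have "cls N b \<in> elems N" using cls_in_elems[OF sN b(1)] .
        then have "cls N b \<in> f ` elems M" using iso_bij[OF iso] by (simp add: bij_betw_def)
        then obtain X where X: "X \<in> elems M" "cls N b = f X" by blast
        then have "fi (cls N b) = X" using fif by simp
        then show ?thesis using X b(2) by simp
      qed
      then show "\<exists>b. b \<in> scarr N \<and> fi (cls N b) = cls M a \<and> f (cls M a) = cls N b" using b by blast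
    qed
    from bchoice[OF this] obtain c
      where c: "\<forall>a\<in>F0. c a \<in> scarr N \<and> fi (cls N (c a)) = cls M a \<and> f (cls M a) = cls N (c a)" by blast
    have cc: "\<forall>a\<in>F0. c a \<in> scarr N \<and> a \<in> scarr M \<and> fi (cls N (c a)) = cls M a" using c F0M by blast
    have refsF0: "refs Es Ps Rs Fs \<subseteq> F0" unfolding F0_def by blast
    have arF: "\<forall>q\<in>Fs. length (fst (snd q)) = ar_f (fst q)" using vD unfolding validD_def by blast
    have satN: "satD N (c ` Es) (map_prod c c ` Ps) (trR c ` Rs) (trF c ` Fs)"
      using transfer[OF isofi cc refsF0 arF] satM by blast
    define Q where "Q = (\<lambda>pr. (c (fst pr), snd pr)) ` P"
    have cS: "\<forall>b\<in>refs Es Ps Rs Fs. c b \<in> S"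
    proof
      fix b assume "b \<in> refs Es Ps Rs Fs"
      then have "b \<in> F0" using refsF0 by blast
      then show "c b \<in> S" using cc NS by blast
    qed
    have vT: "validD ar_f ar_r S (c ` Es) (map_prod c c ` Ps) (trR c ` Rs) (trF c ` Fs)"
      using validD_tr[OF vD cS] .
    have PF0: "fst pr \<in> F0" if "pr \<in> P" for pr using that unfolding F0_def by blast
    have vQ: "validD ar_f ar_r S {} Q {} {}"
    proof -
      have "finite Q" using fP unfolding Q_def by simp
      moreover have "\<forall>pr\<in>Q. fst pr \<in> S \<and> snd pr \<in> S"
      proof
        fix q assume "q \<in> Q"
        then obtain pr where pr: "pr \<in> P" "q = (c (fst pr), snd pr)" unfolding Q_def by blast
        have "snd pr \<in> scarr N" using Pp pr(1) by blast
        moreover have "c (fst pr) \<in> scarr N" using cc PF0[OF pr(1)] by blast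
        ultimately show "fst q \<in> S \<and> snd q \<in> S" using pr(2) NS by auto
      qed
      ultimately show ?thesis unfolding validD_def by simp
    qed
    define W where "W = V1 \<inter> basicM ar_f ar_r S (c ` Es) (map_prod c c ` Ps) (trR c ` Rs) (trF c ` Fs)
       \<inter> basicM ar_f ar_r S {} Q {} {}"
    have oW: "openin (MTop ar_f ar_r S) W"
      unfolding W_def using o2 basicM_open[OF vT] basicM_open[OF vQ] by (intro openin_Int)
    have satNQ: "satD N {} Q {} {}"
      unfolding satD_Q
    proof
      fix q assume "q \<in> Q"
      then obtain pr where pr: "pr \<in> P" "q = (c (fst pr), snd pr)" unfolding Q_def by blast
      have b: "snd pr \<in> scarr N" and e1: "f (cls M (fst pr)) = cls N (snd pr)" using Pp pr(1) by blast+
      have a: "c (fst pr) \<in> scarr N" and e2: "f (cls M (fst pr)) = cls N (c (fst pr))"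
        using c PF0[OF pr(1)] by blast+
      have "(c (fst pr), snd pr) \<in> seqv N" using cls_eq_iff[OF sN a b] e1 e2 by simp
      then show "fst q \<in> scarr N \<and> snd q \<in> scarr N \<and> (fst q, snd q) \<in> seqv N" using a b pr(2) by simp
    qed
    have NSig: "N \<in> MSig ar_f ar_r S" using sN MSig_struct by blast
    have NW: "N \<in> W" unfolding W_def basicM_def using NV1 NSig satN satNQ by blast
    show "\<exists>T'. openin (subtopology (MTop ar_f ar_r S) (MT ar_f ar_r S T)) T' \<and> x \<in> T' \<and> T' \<subseteq> icod ` U"
    proof (intro exI conjI)
      show "openin (subtopology (MTop ar_f ar_r S) (MT ar_f ar_r S T)) (W \<inter> MT ar_f ar_r S T)"
        unfolding openin_subtopology using oW by blast
      show "x \<in> W \<inter> MT ar_f ar_r S T" using NW NMT xp unfolding N_def by simp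
      show "W \<inter> MT ar_f ar_r S T \<subseteq> icod ` U"
      proof
        fix N' assume N': "N' \<in> W \<inter> MT ar_f ar_r S T"
        have N'MT: "N' \<in> MT ar_f ar_r S T" using N' by blast
        have sN': "is_struct ar_f ar_r S N'" using MT_MSig[OF N'MT] MSig_struct by blast
        have N'V1: "N' \<in> V1" using N' unfolding W_def by blast
        have satT': "satD N' (c ` Es) (map_prod c c ` Ps) (trR c ` Rs) (trF c ` Fs)"
          using N' unfolding W_def basicM_def by blast
        have satQ': "satD N' {} Q {} {}" using N' unfolding W_def basicM_def by blast
        have Q': "\<forall>q\<in>Q. fst q \<in> scarr N' \<and> snd q \<in> scarr N' \<and> (fst q, snd q) \<in> seqv N'"
          using satQ' unfolding satD_Q .
        have Qp: "c (fst pr) \<in> scarr N' \<and> snd pr \<in> scarr N' \<and> (c (fst pr), snd pr) \<in> seqv N'"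
          if "pr \<in> P" for pr
        proof -
          have "(c (fst pr), snd pr) \<in> Q" using that unfolding Q_def by blast
          then show ?thesis using Q' by fastforce
        qed
        have cN': "\<forall>b\<in>F0. c b \<in> scarr N'"
        proof
          fix b assume b: "b \<in> F0"
          show "c b \<in> scarr N'"
          proof (cases "b \<in> refs Es Ps Rs Fs")
            case True
            have "c b \<in> refs (c ` Es) (map_prod c c ` Ps) (trR c ` Rs) (trF c ` Fs)"
              using refs_tr_mem[OF True] .
            then show ?thesis using satD_refs[OF satT'] by blast
          next
            case False
            then have "b \<in> fst ` P" using b unfolding F0_def by blast
            then obtain pr where "pr \<in> P" "b = fst pr" by blast
            then show ?thesis using Qp by blast
          qed
        qed
        have F0S: "F0 \<subseteq> S" using F0M MS by blast
        obtain M'' g where iso': "is_iso ar_f ar_r S N' M'' g"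
          and gc: "\<forall>b\<in>F0. b \<in> scarr M'' \<and> g (cls N' (c b)) = cls M'' b"
          using construct[OF sN' inf finF0 F0S cN'] by blast
        have cc': "\<forall>b\<in>F0. c b \<in> scarr N' \<and> b \<in> scarr M'' \<and> g (cls N' (c b)) = cls M'' b"
          using cN' gc by blast
        have satM'': "satD M'' Es Ps Rs Fs" using transfer[OF iso' cc' refsF0 arF] satT' by blast
        have M''Sig: "M'' \<in> MSig ar_f ar_r S" using iso_s2[OF iso'] MSig_struct by blast
        have M''U1: "M'' \<in> U1" using M''Sig satM'' BU unfolding basicM_def by blast
        have M''MT: "M'' \<in> MT ar_f ar_r S T" using MT_iso[OF iso' N'MT geo] .
        obtain h where isoh: "is_iso ar_f ar_r S M'' N' h" and hg: "\<forall>Y\<in>elems N'. h (g Y) = Y"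
          using iso_inv[OF iso'] by blast
        have Pq: "\<forall>pr\<in>P. fst pr \<in> scarr M'' \<and> snd pr \<in> scarr N' \<and> h (cls M'' (fst pr)) = cls N' (snd pr)"
        proof
          fix pr assume pr: "pr \<in> P"
          have q: "c (fst pr) \<in> scarr N'" "snd pr \<in> scarr N'" "(c (fst pr), snd pr) \<in> seqv N'"
            using Qp[OF pr] by blast+
          have e1: "cls N' (c (fst pr)) = cls N' (snd pr)" using cls_eq_iff[OF sN' q(1) q(2)] q(3) by simp
          have g1: "fst pr \<in> scarr M''" "g (cls N' (c (fst pr))) = cls M'' (fst pr)"
            using gc PF0[OF pr] by blast+
          have "h (cls M'' (fst pr)) = h (g (cls N' (c (fst pr))))" using g1(2) by simp
          also have "\<dots> = cls N' (c (fst pr))" using hg cls_in_elems[OF sN' q(1)] by blast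
          finally show "fst pr \<in> scarr M'' \<and> snd pr \<in> scarr N' \<and> h (cls M'' (fst pr)) = cls N' (snd pr)"
            using g1(1) q(2) e1 by simp
        qed
        have qI: "(M'', N', h) \<in> ISig ar_f ar_r S" using ISig_mem[OF isoh] .
        have qB: "(M'', N', h) \<in> basicI ar_f ar_r S U1 V1 P"
          unfolding basicI_mem using qI M''U1 N'V1 Pq by blast
        have qG: "(M'', N', h) \<in> G" using qB BG by blast
        have qIT: "(M'', N', h) \<in> IT ar_f ar_r S T"
          unfolding IT_iff idom_def icod_def using qI M''MT N'MT by simp
        have "(M'', N', h) \<in> U" using qG qIT UG by blast
        moreover have "icod (M'', N', h) = N'" by (simp add: icod_def)
        ultimately show "N' \<in> icod ` U" by (metis image_eqI)
      qed
    qed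
  qed
qed

theorem proposition2p8:
  fixes ar_f :: "'f \<Rightarrow> nat" and ar_r :: "'r \<Rightarrow> nat" and S :: "'s set"
    and T :: "('f, 'r, 'i) gseq set"
  assumes "infinite S"
    and "(UNIV :: ('f + 'r) set) \<lesssim> S"
    and "geometric_theory ar_f ar_r T"
  shows "open_map (subtopology (ITop ar_f ar_r S) (IT ar_f ar_r S T))
                  (subtopology (MTop ar_f ar_r S) (MT ar_f ar_r S T)) idom
       \<and> open_map (subtopology (ITop ar_f ar_r S) (IT ar_f ar_r S T))
                  (subtopology (MTop ar_f ar_r S) (MT ar_f ar_r S T)) icod"
  using idom_open[OF assms(1) assms(3)] icod_open[OF assms(1) assms(3)] by blast


end
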